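(* Let $r\in\mathbb Z_+$ be even and $\Gamma=\Gamma_{(r,r)}$. If $E\in\mathcal C_\Gamma\setminus\{-4,0,4\}$, then $E\in\operatorname{int}B_j^\Gamma$ for some $j$.
   Context: For $r\ge3$ and $\theta\in\mathbb R$, $\Delta_\theta^r\in\mathbb C^{r\times r}$ is the Hermitian matrix with $1$ on the sub- and superdiagonals, $0$ on the diagonal, entry $e^{-i\theta}$ in position $(1,r)$ and $e^{i\theta}$ in position $(r,1)$, all other entries $0$; $\Delta_\theta^2=\begin{bmatrix}0&1+e^{-i\theta}\\1+e^{i\theta}&0\end{bmatrix}$. $\Gamma=\Gamma_{(r,r)}=([0,r)\times[0,r))\cap\mathbb Z^2$, $\Delta^\Gamma_{\theta,\varphi}=\Delta_\theta^r\otimes I_r+I_r\otimes\Delta_\varphi^r$, with eigenvalues $\lambda_1^\Gamma(\theta,\varphi)\le\cdots\le\lambda_{r^2}^\Gamma(\theta,\varphi)$ counted with multiplicity, and bands $B_j^\Gamma=\{\lambda_j^\Gamma(\theta,\varphi):(\theta,\varphi)\in[0,\pi]^2\}$. $\mathcal C_r=\{2\cos(\pi j/r): j\in\mathbb Z,\ 0\le j\le r\}$ and $\mathcal C_\Gamma=\{a+b:a,b\in\mathcal C_r\}$. *)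

theory Defs
  imports "HOL-Analysis.Analysis" "Jordan_Normal_Form.Char_Poly"
begin

(* Delta_theta^r, 0-indexed: rows/cols 0..r-1. Entry (1,r) of the paper is (0, r-1) here. *)
definition Delta :: "nat \<Rightarrow> real \<Rightarrow> complex mat" where
  "Delta r \<theta> =
     (if r = 2 then
        mat 2 2 (\<lambda>(i,j). if i = 0 \<and> j = 1 then 1 + cis (-\<theta>)
                         else if i = 1 \<and> j = 0 then 1 + cis \<theta> else 0)
      else
        mat r r (\<lambda>(i,j). if j = i + 1 \<or> i = j + 1 then 1
                         else if i = 0 \<and> j = r - 1 then cis (-\<theta>)
                         else if i = r - 1 \<and> j = 0 then cis \<theta> else 0))"

(* Kronecker product of an m x m and an n x n matrix; index (a,b) \<mapsto> a*n+b *)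
definition kron :: "complex mat \<Rightarrow> complex mat \<Rightarrow> complex mat" where
  "kron A B = mat (dim_row A * dim_row B) (dim_col A * dim_col B)
     (\<lambda>(i,j). A $$ (i div dim_row B, j div dim_col B) * B $$ (i mod dim_row B, j mod dim_col B))"

definition DeltaGamma :: "nat \<Rightarrow> real \<Rightarrow> real \<Rightarrow> complex mat" where
  "DeltaGamma r \<theta> \<phi> = kron (Delta r \<theta>) (1\<^sub>m r) + kron (1\<^sub>m r) (Delta r \<phi>)"

(* eigenvalues of a Hermitian matrix counted with (algebraic) multiplicity, in increasing order;
   lambda k A is the k-th smallest one (1-indexed) *)
definition eigs_sorted :: "complex mat \<Rightarrow> real list" where
  "eigs_sorted A = sorted_list_of_multiset (image_mset Re (proots (char_poly A)))"

definition lam :: "nat \<Rightarrow> complex mat \<Rightarrow> real" where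
  "lam k A = eigs_sorted A ! (k - 1)"

definition band :: "nat \<Rightarrow> nat \<Rightarrow> real set" where
  "band r j = {lam j (DeltaGamma r \<theta> \<phi>) | \<theta> \<phi>. \<theta> \<in> {0..pi} \<and> \<phi> \<in> {0..pi}}"

definition Cr :: "nat \<Rightarrow> real set" where
  "Cr r = {2 * cos (pi * real j / real r) | j. j \<le> r}"

definition CGamma :: "nat \<Rightarrow> real set" where
  "CGamma r = {a + b | a b. a \<in> Cr r \<and> b \<in> Cr r}"

end

theory Submission
  imports Defs
begin



lemma sum_div_mod:
  fixes n m :: nat
  assumes "n > 0"
  shows "(\<Sum>t<m*n. g (t div n) (t mod n)) = (\<Sum>a<m. \<Sum>b<n. (g a b :: 'a::comm_monoid_add))"
proof -
  have bij: "bij_betw (\<lambda>(a,b). a*n+b) ({..<m}\<times>{..<n}) {..<m*n}"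
  proof (rule bij_betw_byWitness[where f' = "\<lambda>t. (t div n, t mod n)"])
    show "\<forall>x\<in>{..<m} \<times> {..<n}. (case (case x of (a, b) \<Rightarrow> a * n + b) of t \<Rightarrow> (t div n, t mod n)) = x"
      using assms by auto
    show "\<forall>y\<in>{..<m * n}. (case (y div n, y mod n) of (a, b) \<Rightarrow> a * n + b) = y" by auto
    show "(\<lambda>(a, b). a * n + b) ` ({..<m} \<times> {..<n}) \<subseteq> {..<m * n}"
    proof
      fix x assume "x \<in> (\<lambda>(a, b). a * n + b) ` ({..<m} \<times> {..<n})"
      then obtain a b where "x = a*n+b" "a < m" "b < n" by auto
      then have "x < (a+1)*n" by simp
      also have "\<dots> \<le> m*n" using \<open>a<m\<close> by (intro mult_right_mono) auto
      finally show "x \<in> {..<m*n}" by simp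
    qed
    show "(\<lambda>t. (t div n, t mod n)) ` {..<m * n} \<subseteq> {..<m} \<times> {..<n}"
      using assms by (auto simp: less_mult_imp_div_less)
  qed
  have "(\<Sum>t<m*n. g (t div n) (t mod n)) = (\<Sum>x\<in>{..<m}\<times>{..<n}. g ((case x of (a,b) \<Rightarrow> a*n+b) div n) ((case x of (a,b) \<Rightarrow> a*n+b) mod n))"
    by (rule sum.reindex_bij_betw[OF bij, symmetric])
  also have "\<dots> = (\<Sum>x\<in>{..<m}\<times>{..<n}. g (fst x) (snd x))"
    using assms by (intro sum.cong) auto
  also have "\<dots> = (\<Sum>a<m. \<Sum>b<n. g a b)"
    by (simp add: sum.cartesian_product split_beta)
  finally show ?thesis .
qed

lemma mult_entry:
  assumes "A \<in> carrier_mat a b" "B \<in> carrier_mat b c" "i < a" "j < c"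
  shows "(A * B) $$ (i,j) = (\<Sum>t<b. A $$ (i,t) * B $$ (t,j))"
  using assms by (auto simp: scalar_prod_def lessThan_atLeast0 intro!: sum.cong)

lemma kron_carrier: "A \<in> carrier_mat m m \<Longrightarrow> B \<in> carrier_mat n n \<Longrightarrow> kron A B \<in> carrier_mat (m*n) (m*n)"
  by (auto simp: kron_def)

lemma kron_entry: "A \<in> carrier_mat m m \<Longrightarrow> B \<in> carrier_mat n n \<Longrightarrow> i < m*n \<Longrightarrow> j < m*n \<Longrightarrow>
  kron A B $$ (i,j) = A $$ (i div n, j div n) * B $$ (i mod n, j mod n)"
  by (auto simp: kron_def)

lemma kron_mult:
  assumes A: "A \<in> carrier_mat m m" and C: "C \<in> carrier_mat m m"
    and B: "B \<in> carrier_mat n n" and D: "D \<in> carrier_mat n n" and n: "n > 0"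
  shows "kron A B * kron C D = kron (A * C) (B * D)"
proof (rule eq_matI)
  have AC: "A * C \<in> carrier_mat m m" and BD: "B * D \<in> carrier_mat n n" using A B C D by auto
  show "dim_row (kron A B * kron C D) = dim_row (kron (A * C) (B * D))"
       "dim_col (kron A B * kron C D) = dim_col (kron (A * C) (B * D))"
    using A B C D by (auto simp: kron_def)
  fix i j assume "i < dim_row (kron (A * C) (B * D))" "j < dim_col (kron (A * C) (B * D))"
  then have ij: "i < m*n" "j < m*n" using A B C D by (auto simp: kron_def)
  have idm: "i div n < m" "j div n < m" using ij n by (auto simp: less_mult_imp_div_less)
  have "(kron A B * kron C D) $$ (i,j) = (\<Sum>t<m*n. kron A B $$ (i,t) * kron C D $$ (t,j))"
    by (rule mult_entry[OF kron_carrier[OF A B] kron_carrier[OF C D] ij])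
  also have "\<dots> = (\<Sum>t<m*n. (\<lambda>a b. A $$ (i div n, a) * B $$ (i mod n, b) * (C $$ (a, j div n) * D $$ (b, j mod n))) (t div n) (t mod n))"
    using ij by (intro sum.cong refl, subst kron_entry[OF A B], simp_all, subst kron_entry[OF C D], simp_all)
  also have "\<dots> = (\<Sum>a<m. \<Sum>b<n. A $$ (i div n, a) * B $$ (i mod n, b) * (C $$ (a, j div n) * D $$ (b, j mod n)))"
    by (rule sum_div_mod[OF n])
  also have "\<dots> = (\<Sum>a<m. A $$ (i div n, a) * C $$ (a, j div n)) * (\<Sum>b<n. B $$ (i mod n, b) * D $$ (b, j mod n))"
    by (simp add: sum_product mult_ac)
  also have "\<dots> = (A*C) $$ (i div n, j div n) * (B*D) $$ (i mod n, j mod n)"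
    using idm n by (simp add: mult_entry[OF A C] mult_entry[OF B D])
  also have "\<dots> = kron (A * C) (B * D) $$ (i,j)"
    using ij by (simp add: kron_entry[OF AC BD])
  finally show "(kron A B * kron C D) $$ (i,j) = kron (A * C) (B * D) $$ (i,j)" .
qed

lemma kron_one: "n > 0 \<Longrightarrow> kron (1\<^sub>m m) (1\<^sub>m n) = 1\<^sub>m (m*n)"
proof (rule eq_matI)
  assume n: "n > 0"
  show "dim_row (kron (1\<^sub>m m) (1\<^sub>m n)) = dim_row (1\<^sub>m (m*n))" "dim_col (kron (1\<^sub>m m) (1\<^sub>m n)) = dim_col (1\<^sub>m (m*n))"
    by (auto simp: kron_def)
  fix i j assume "i < dim_row (1\<^sub>m (m * n))" "j < dim_col (1\<^sub>m (m * n))"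
  then have ij: "i < m*n" "j < m*n" by auto
  have "i div n < m" "j div n < m" using ij n by (auto simp: less_mult_imp_div_less)
  moreover have "(i div n = j div n \<and> i mod n = j mod n) = (i = j)"
    by (metis div_mult_mod_eq)
  ultimately show "kron (1\<^sub>m m) (1\<^sub>m n) $$ (i, j) = 1\<^sub>m (m * n) $$ (i, j)"
    using ij n by (auto simp: kron_entry[of _ m _ n])
qed



definition alph :: "nat \<Rightarrow> real \<Rightarrow> nat \<Rightarrow> real" where
  "alph r \<theta> k = (\<theta> + 2*pi*real k) / real r"

lemma cis_ralph: "r > 0 \<Longrightarrow> cis (real r * alph r \<theta> k) = cis \<theta>"
proof -
  assume r: "r > 0"
  have "real r * alph r \<theta> k = \<theta> + 2*pi*real k" using r by (simp add: alph_def)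
  then have "cis (real r * alph r \<theta> k) = cis \<theta> * cis (2*pi*real k)" by (simp only: cis_mult)
  also have "cis (2*pi*real k) = 1" by (rule cis_multiple_2pi) simp
  finally show ?thesis by simp
qed

lemma mult_entry_A2:
  assumes "A \<in> carrier_mat a b" "B \<in> carrier_mat b c" "i < a" "j < c"
  shows "(A * B) $$ (i,j) = (\<Sum>t<b. A $$ (i,t) * B $$ (t,j))"
  using assms by (auto simp: scalar_prod_def lessThan_atLeast0 intro!: sum.cong)

lemma Delta_carrier: "r \<ge> 2 \<Longrightarrow> Delta r \<theta> \<in> carrier_mat r r"
  by (auto simp: Delta_def)

lemma Delta_row_sum3:
  assumes r: "r \<ge> 3" and m: "m < r"
  shows "(\<Sum>t<r. Delta r \<theta> $$ (m,t) * x t) =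
     (if m+1 < r then x (m+1) else cis \<theta> * x 0) + (if m > 0 then x (m-1) else cis (-\<theta>) * x (r-1))"
proof -
  define a where "a = (if m+1<r then m+1 else 0)"
  define b where "b = (if m>0 then m-1 else r-1)"
  define ca where "ca = (if m+1<r then 1 else cis \<theta>)"
  define cb where "cb = (if m>0 then 1 else cis (-\<theta>))"
  have ab: "a < r" "b < r" "a \<noteq> b" using r m by (auto simp: a_def b_def)
  have ent: "Delta r \<theta> $$ (m,t) = (if t = a then ca else 0) + (if t = b then cb else 0)" if "t < r" for t
    using r m that unfolding Delta_def a_def b_def ca_def cb_def by auto
  have "(\<Sum>t<r. Delta r \<theta> $$ (m,t) * x t) = (\<Sum>t<r. (if t = a then ca * x t else 0) + (if t = b then cb * x t else 0))"
    by (intro sum.cong refl) (simp add: ent distrib_right)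
  also have "\<dots> = ca * x a + cb * x b"
    using ab by (simp add: sum.distrib)
  finally show ?thesis by (simp add: a_def b_def ca_def cb_def)
qed

lemma Delta_F_entry:
  assumes r: "r \<ge> 2" and m: "m < r"
  shows "(\<Sum>t<r. Delta r \<theta> $$ (m,t) * cis (real t * alph r \<theta> k)) =
     cis ((real m + 1) * alph r \<theta> k) + cis ((real m - 1) * alph r \<theta> k)"
proof -
  let ?a = "alph r \<theta> k"
  have per: "cis (real r * ?a) = cis \<theta>" using r by (simp add: cis_ralph)
  show ?thesis
  proof (cases "r = 2")
    case True
    have e: "(\<Sum>t<r. Delta r \<theta> $$ (m,t) * cis (real t * ?a)) = Delta r \<theta> $$ (m,0) + Delta r \<theta> $$ (m,1) * cis ?a"
      using True by (simp add: numeral_2_eq_2)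
    have per2: "cis (2 * ?a) = cis \<theta>" using per True by simp
    show ?thesis
    proof (cases "m = 0")
      case True
      have ci: "cis (-\<theta>) = cis (-(2 * ?a))"
        using per2 by (metis cis_inverse minus_minus)
      have "Delta r \<theta> $$ (m,0) + Delta r \<theta> $$ (m,1) * cis ?a = (1 + cis (-(2 * ?a))) * cis ?a"
        using True \<open>r = 2\<close> ci by (simp add: Delta_def)
      also have "\<dots> = cis ?a + cis (- ?a)" by (simp add: distrib_right cis_mult)
      finally show ?thesis using e True by simp
    next
      case False
      then have "m = 1" using m \<open>r = 2\<close> by simp
      then show ?thesis using e \<open>r = 2\<close> per2
        by (simp add: Delta_def cis_mult add.commute)
    qed
  next
    case False
    then have r3: "r \<ge> 3" using r by simp
    have "(\<Sum>t<r. Delta r \<theta> $$ (m,t) * cis (real t * ?a)) =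
       (if m+1 < r then cis (real (m+1) * ?a) else cis \<theta> * cis (real 0 * ?a)) +
       (if m > 0 then cis (real (m-1) * ?a) else cis (-\<theta>) * cis (real (r-1) * ?a))"
      by (rule Delta_row_sum3[OF r3 m])
    also have "(if m+1 < r then cis (real (m+1) * ?a) else cis \<theta> * cis (real 0 * ?a)) = cis ((real m + 1) * ?a)"
    proof (cases "m+1 < r")
      case True then show ?thesis by (simp add: add.commute)
    next
      case False
      then have "real r = real m + 1" using m by simp
      then show ?thesis using False per by simp
    qed
    also have "(if m > 0 then cis (real (m-1) * ?a) else cis (-\<theta>) * cis (real (r-1) * ?a)) = cis ((real m - 1) * ?a)"
    proof (cases "m > 0")
      case True then show ?thesis by (simp add: of_nat_diff)
    next
      case False
      have "cis (-\<theta>) * cis (real (r-1) * ?a) = cis (-\<theta>) * (cis (real r * ?a) * cis (- ?a))"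
        using r by (simp add: cis_mult of_nat_diff algebra_simps)
      also have "\<dots> = cis (- ?a)" using per by (simp add: cis_mult)
      finally show ?thesis using False by simp
    qed
    finally show ?thesis .
  qed
qed

definition Fm :: "nat \<Rightarrow> real \<Rightarrow> complex mat" where
  "Fm r \<theta> = mat r r (\<lambda>(m,k). cis (real m * alph r \<theta> k))"
definition Qm :: "nat \<Rightarrow> real \<Rightarrow> complex mat" where
  "Qm r \<theta> = mat r r (\<lambda>(k,m). cis (- (real m * alph r \<theta> k)) / of_nat r)"
definition Dm :: "nat \<Rightarrow> real \<Rightarrow> complex mat" where
  "Dm r \<theta> = mat r r (\<lambda>(i,j). if i = j then complex_of_real (2 * cos (alph r \<theta> i)) else 0)"

lemma Fm_carrier: "Fm r \<theta> \<in> carrier_mat r r" and Qm_carrier: "Qm r \<theta> \<in> carrier_mat r r"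
  and Dm_carrier: "Dm r \<theta> \<in> carrier_mat r r"
  by (auto simp: Fm_def Qm_def Dm_def)

lemma cis_plus_minus: "cis a + cis (-a) = complex_of_real (2 * cos a)"
  by (simp add: complex_eq_iff)

lemma Delta_F:
  assumes r: "r \<ge> 2"
  shows "Delta r \<theta> * Fm r \<theta> = Fm r \<theta> * Dm r \<theta>"
proof (rule eq_matI)
  show "dim_row (Delta r \<theta> * Fm r \<theta>) = dim_row (Fm r \<theta> * Dm r \<theta>)"
       "dim_col (Delta r \<theta> * Fm r \<theta>) = dim_col (Fm r \<theta> * Dm r \<theta>)"
    using Delta_carrier[OF r] by (auto simp: Fm_def Dm_def)
  fix m k assume "m < dim_row (Fm r \<theta> * Dm r \<theta>)" "k < dim_col (Fm r \<theta> * Dm r \<theta>)"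
  then have mk: "m < r" "k < r" by (auto simp: Fm_def Dm_def)
  let ?a = "alph r \<theta> k"
  have "(Delta r \<theta> * Fm r \<theta>) $$ (m,k) = (\<Sum>t<r. Delta r \<theta> $$ (m,t) * Fm r \<theta> $$ (t,k))"
    by (rule mult_entry_A2[OF Delta_carrier[OF r] Fm_carrier mk])
  also have "\<dots> = (\<Sum>t<r. Delta r \<theta> $$ (m,t) * cis (real t * ?a))"
    using mk by (intro sum.cong refl) (simp add: Fm_def)
  also have "\<dots> = cis ((real m + 1) * ?a) + cis ((real m - 1) * ?a)"
    by (rule Delta_F_entry[OF r mk(1)])
  also have "\<dots> = cis (real m * ?a) * (cis ?a + cis (- ?a))"
    by (simp add: cis_mult distrib_left algebra_simps)
  also have "\<dots> = cis (real m * ?a) * complex_of_real (2 * cos ?a)"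
    by (simp add: cis_plus_minus)
  also have "\<dots> = (\<Sum>t<r. Fm r \<theta> $$ (m,t) * Dm r \<theta> $$ (t,k))"
  proof -
    have "(\<Sum>t<r. Fm r \<theta> $$ (m,t) * Dm r \<theta> $$ (t,k)) = (\<Sum>t<r. if t = k then cis (real m * ?a) * complex_of_real (2 * cos ?a) else 0)"
      using mk by (intro sum.cong refl) (auto simp: Fm_def Dm_def)
    also have "\<dots> = cis (real m * ?a) * complex_of_real (2 * cos ?a)" using mk by simp
    finally show ?thesis by simp
  qed
  also have "\<dots> = (Fm r \<theta> * Dm r \<theta>) $$ (m,k)"
    by (rule mult_entry_A2[OF Fm_carrier Dm_carrier mk, symmetric])
  finally show "(Delta r \<theta> * Fm r \<theta>) $$ (m,k) = (Fm r \<theta> * Dm r \<theta>) $$ (m,k)" .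
qed

lemma root_ne_1:
  assumes "k < r" "k' < r" "k \<noteq> k'"
  shows "cis (2*pi*(real k' - real k)/real r) \<noteq> 1"
proof
  assume "cis (2*pi*(real k' - real k)/real r) = 1"
  then have "cos (2*pi*(real k' - real k)/real r) = 1" by (simp add: complex_eq_iff)
  then obtain n :: int where n: "2*pi*(real k' - real k)/real r = n * 2 * pi" by (auto simp: cos_one_2pi_int)
  have r: "real r > 0" using assms by simp
  from n have "(real k' - real k) * (2*pi) = (n * real r) * (2*pi)" using r by (simp add: field_simps)
  then have "real k' - real k = n * real r" by simp
  then have "real_of_int (int k' - int k) = real_of_int (n * int r)" by simp
  then have e: "int k' - int k = n * int r" by (simp only: of_int_eq_iff)
  show False
  proof (cases "n = 0")
    case True then show False using e assms by simp
  next
    case False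
    then have "\<bar>n\<bar> \<ge> 1" by linarith
    then have "\<bar>n\<bar> * int r \<ge> 1 * int r" by (intro mult_right_mono) auto
    then have "\<bar>n * int r\<bar> \<ge> int r" by (simp add: abs_mult)
    then show False using e assms by linarith
  qed
qed

lemma QF:
  assumes r: "r > 0"
  shows "Qm r \<theta> * Fm r \<theta> = 1\<^sub>m r"
proof (rule eq_matI)
  show "dim_row (Qm r \<theta> * Fm r \<theta>) = dim_row (1\<^sub>m r)" "dim_col (Qm r \<theta> * Fm r \<theta>) = dim_col (1\<^sub>m r)"
    by (auto simp: Fm_def Qm_def)
  fix k k' assume "k < dim_row (1\<^sub>m r)" "k' < dim_col (1\<^sub>m r)"
  then have kk: "k < r" "k' < r" by auto
  define z where "z = cis (2*pi*(real k' - real k)/real r)"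
  have "(Qm r \<theta> * Fm r \<theta>) $$ (k,k') = (\<Sum>t<r. Qm r \<theta> $$ (k,t) * Fm r \<theta> $$ (t,k'))"
    by (rule mult_entry_A2[OF Qm_carrier Fm_carrier kk])
  also have "\<dots> = (\<Sum>t<r. z ^ t) / of_nat r"
  proof -
    have "Qm r \<theta> $$ (k,t) * Fm r \<theta> $$ (t,k') = z ^ t / of_nat r" if "t < r" for t
    proof -
      have "Qm r \<theta> $$ (k,t) * Fm r \<theta> $$ (t,k') = cis (real t * (alph r \<theta> k' - alph r \<theta> k)) / of_nat r"
        using that kk by (simp add: Fm_def Qm_def cis_mult algebra_simps)
      also have "real t * (alph r \<theta> k' - alph r \<theta> k) = real t * (2*pi*(real k' - real k)/real r)"
        using r by (simp add: alph_def field_simps)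
      also have "cis (real t * (2*pi*(real k' - real k)/real r)) = z ^ t"
        unfolding z_def by (rule Complex.DeMoivre[symmetric])
      finally show ?thesis .
    qed
    then show ?thesis by (simp add: sum_divide_distrib)
  qed
  also have "\<dots> = 1\<^sub>m r $$ (k,k')"
  proof (cases "k = k'")
    case True
    then have "z = 1" by (simp add: z_def)
    then show ?thesis using True kk r by simp
  next
    case False
    have z1: "z \<noteq> 1" using root_ne_1[OF kk False] by (simp add: z_def)
    have "z ^ r = cis (real r * (2*pi*(real k' - real k)/real r))" by (simp add: z_def Complex.DeMoivre)
    also have "\<dots> = cis (2 * pi * (real_of_int (int k' - int k)))" using r by simp
    also have "\<dots> = 1" by (rule cis_multiple_2pi) simp
    finally have "z ^ r = 1" .
    then have "(\<Sum>t<r. z ^ t) = 0" using z1 by (simp add: sum_gp_strict)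
    then show ?thesis using False kk by simp
  qed
  finally show "(Qm r \<theta> * Fm r \<theta>) $$ (k,k') = 1\<^sub>m r $$ (k,k')" .
qed


definition Pm where "Pm r \<theta> \<phi> = kron (Fm r \<theta>) (Fm r \<phi>)"
definition Qbm where "Qbm r \<theta> \<phi> = kron (Qm r \<theta>) (Qm r \<phi>)"
definition Dg where "Dg r \<theta> \<phi> = kron (Dm r \<theta>) (1\<^sub>m r) + kron (1\<^sub>m r) (Dm r \<phi>)"

lemma DG_P:
  assumes r: "r \<ge> 2"
  shows "DeltaGamma r \<theta> \<phi> * Pm r \<theta> \<phi> = Pm r \<theta> \<phi> * Dg r \<theta> \<phi>"
proof -
  have r0: "r > 0" using r by simp
  note D1 = Delta_carrier[OF r, of \<theta>] and D2 = Delta_carrier[OF r, of \<phi>]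
  note F1 = Fm_carrier[of r \<theta>] and F2 = Fm_carrier[of r \<phi>]
  note M1 = Dm_carrier[of r \<theta>] and M2 = Dm_carrier[of r \<phi>]
  have "DeltaGamma r \<theta> \<phi> * Pm r \<theta> \<phi> = kron (Delta r \<theta>) (1\<^sub>m r) * Pm r \<theta> \<phi> + kron (1\<^sub>m r) (Delta r \<phi>) * Pm r \<theta> \<phi>"
    unfolding DeltaGamma_def Pm_def
    by (rule add_mult_distrib_mat[OF kron_carrier[OF D1 one_carrier_mat] kron_carrier[OF one_carrier_mat D2] kron_carrier[OF F1 F2]])
  also have "\<dots> = kron (Fm r \<theta> * Dm r \<theta>) (Fm r \<phi>) + kron (Fm r \<theta>) (Fm r \<phi> * Dm r \<phi>)"
    unfolding Pm_def
    by (simp add: kron_mult[OF D1 F1 _ F2 r0] kron_mult[OF _ F1 D2 F2 r0] Delta_F[OF r]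
        left_mult_one_mat[OF F1] left_mult_one_mat[OF F2])
  also have "\<dots> = Pm r \<theta> \<phi> * kron (Dm r \<theta>) (1\<^sub>m r) + Pm r \<theta> \<phi> * kron (1\<^sub>m r) (Dm r \<phi>)"
    unfolding Pm_def
    by (simp add: kron_mult[OF F1 M1 F2 _ r0] kron_mult[OF F1 _ F2 M2 r0]
        right_mult_one_mat[OF F1] right_mult_one_mat[OF F2])
  also have "\<dots> = Pm r \<theta> \<phi> * Dg r \<theta> \<phi>"
    unfolding Dg_def Pm_def
    by (rule mult_add_distrib_mat[OF kron_carrier[OF F1 F2] kron_carrier[OF M1 one_carrier_mat] kron_carrier[OF one_carrier_mat M2], symmetric])
  finally show ?thesis .
qed

lemma Pm_carrier: "Pm r \<theta> \<phi> \<in> carrier_mat (r*r) (r*r)"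
  unfolding Pm_def by (rule kron_carrier[OF Fm_carrier Fm_carrier])
lemma Qbm_carrier: "Qbm r \<theta> \<phi> \<in> carrier_mat (r*r) (r*r)"
  unfolding Qbm_def by (rule kron_carrier[OF Qm_carrier Qm_carrier])
lemma Dg_carrier: "Dg r \<theta> \<phi> \<in> carrier_mat (r*r) (r*r)"
  unfolding Dg_def by (intro add_carrier_mat kron_carrier Dm_carrier one_carrier_mat)
lemma DG_carrier: "r \<ge> 2 \<Longrightarrow> DeltaGamma r \<theta> \<phi> \<in> carrier_mat (r*r) (r*r)"
  unfolding DeltaGamma_def by (intro add_carrier_mat kron_carrier Delta_carrier one_carrier_mat)

lemma QP: "r > 0 \<Longrightarrow> Qbm r \<theta> \<phi> * Pm r \<theta> \<phi> = 1\<^sub>m (r*r)"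
  unfolding Qbm_def Pm_def
  by (simp add: kron_mult[OF Qm_carrier Fm_carrier Qm_carrier Fm_carrier] QF kron_one)

lemma DG_similar:
  assumes r: "r \<ge> 2"
  shows "similar_mat (DeltaGamma r \<theta> \<phi>) (Dg r \<theta> \<phi>)"
proof -
  have r0: "r > 0" using r by simp
  have QP: "Qbm r \<theta> \<phi> * Pm r \<theta> \<phi> = 1\<^sub>m (r*r)" by (rule QP[OF r0])
  have PQ: "Pm r \<theta> \<phi> * Qbm r \<theta> \<phi> = 1\<^sub>m (r*r)"
    by (rule mat_mult_left_right_inverse[OF Qbm_carrier Pm_carrier QP])
  have "DeltaGamma r \<theta> \<phi> = DeltaGamma r \<theta> \<phi> * (Pm r \<theta> \<phi> * Qbm r \<theta> \<phi>)"
    using right_mult_one_mat[OF DG_carrier[OF r, of \<theta> \<phi>]] by (simp add: PQ)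
  also have "\<dots> = (DeltaGamma r \<theta> \<phi> * Pm r \<theta> \<phi>) * Qbm r \<theta> \<phi>"
    by (rule assoc_mult_mat[OF DG_carrier[OF r] Pm_carrier Qbm_carrier, symmetric])
  also have "\<dots> = Pm r \<theta> \<phi> * Dg r \<theta> \<phi> * Qbm r \<theta> \<phi>"
    by (simp add: DG_P[OF r])
  finally have "DeltaGamma r \<theta> \<phi> = Pm r \<theta> \<phi> * Dg r \<theta> \<phi> * Qbm r \<theta> \<phi>" .
  then show ?thesis
    using DG_carrier[OF r, of \<theta> \<phi>]
    by (intro similar_matI[OF _ PQ QP]) (auto intro: Pm_carrier Qbm_carrier Dg_carrier)
qed

definition ev :: "nat \<Rightarrow> real \<Rightarrow> real \<Rightarrow> nat \<Rightarrow> real" where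
  "ev r \<theta> \<phi> i = 2 * cos (alph r \<theta> (i div r)) + 2 * cos (alph r \<phi> (i mod r))"

lemma Dg_entry:
  assumes r: "r > 0" and ij: "i < r*r" "j < r*r"
  shows "Dg r \<theta> \<phi> $$ (i,j) = (if i = j then complex_of_real (ev r \<theta> \<phi> i) else 0)"
proof -
  have d: "i div r < r" "j div r < r" "i mod r < r" "j mod r < r" using ij r by (auto simp: less_mult_imp_div_less)
  have "(i div r = j div r \<and> i mod r = j mod r) = (i = j)" by (metis div_mult_mod_eq)
  moreover have "Dg r \<theta> \<phi> $$ (i,j) = Dm r \<theta> $$ (i div r, j div r) * 1\<^sub>m r $$ (i mod r, j mod r)
      + 1\<^sub>m r $$ (i div r, j div r) * Dm r \<phi> $$ (i mod r, j mod r)"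
    unfolding Dg_def using ij kron_carrier[OF one_carrier_mat Dm_carrier, of r r \<phi>]
    by (simp add: kron_entry[OF Dm_carrier one_carrier_mat] kron_entry[OF one_carrier_mat Dm_carrier])
  ultimately show ?thesis
    using d by (auto simp: Dm_def ev_def)
qed

lemma proots_DG:
  assumes r: "r \<ge> 2"
  shows "proots (char_poly (DeltaGamma r \<theta> \<phi>)) = mset (map (\<lambda>i. complex_of_real (ev r \<theta> \<phi> i)) [0..<r*r])"
proof -
  have r0: "r > 0" using r by simp
  have ut: "upper_triangular (Dg r \<theta> \<phi>)"
    unfolding upper_triangular_def using Dg_carrier[of r \<theta> \<phi>] by (auto simp: Dg_entry[OF r0])
  have cp: "char_poly (Dg r \<theta> \<phi>) = (\<Prod>a\<leftarrow>diag_mat (Dg r \<theta> \<phi>). [:- a, 1:])"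
    by (rule char_poly_upper_triangular[OF Dg_carrier ut])
  have dm: "diag_mat (Dg r \<theta> \<phi>) = map (\<lambda>i. complex_of_real (ev r \<theta> \<phi> i)) [0..<r*r]"
    unfolding diag_mat_def using Dg_carrier[of r \<theta> \<phi>] by (auto simp: Dg_entry[OF r0])
  have pl: "proots (\<Prod>a\<leftarrow>xs. [:- a, 1:]) = mset xs" for xs :: "complex list"
  proof (induction xs)
    case Nil then show ?case by simp
  next
    case (Cons a xs)
    have nz: "(\<Prod>a\<leftarrow>xs. [:- a, 1:]) \<noteq> 0" by (auto simp: prod_list_zero_iff)
    have l: "proots [:- a, 1:] = {#a#}" using proots_linear_factor[of "-a"] by simp
    have "proots (\<Prod>a\<leftarrow>a # xs. [:- a, 1:]) = proots ([:- a, 1:] * (\<Prod>a\<leftarrow>xs. [:- a, 1:]))" by simp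
    also have "\<dots> = proots [:- a, 1:] + proots (\<Prod>a\<leftarrow>xs. [:- a, 1:])"
      by (rule proots_mult) (use nz in auto)
    finally show ?case using Cons l by simp
  qed
  show ?thesis
    unfolding char_poly_similar[OF DG_similar[OF r]] cp dm pl ..
qed

lemma eigs_sorted_DG:
  assumes r: "r \<ge> 2"
  shows "eigs_sorted (DeltaGamma r \<theta> \<phi>) = sorted_list_of_multiset (mset (map (ev r \<theta> \<phi>) [0..<r*r]))"
  unfolding eigs_sorted_def proots_DG[OF r] by (simp add: multiset.map_comp o_def)



lemma sin_bound3: "\<bar>sin t - t\<bar> \<le> \<bar>t\<bar>^3" for t :: real
proof -
  have "\<bar>sin t - (\<Sum>m<3. sin_coeff m * t ^ m)\<bar> \<le> inverse (fact 3) * \<bar>t\<bar> ^ 3"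
    by (rule Maclaurin_sin_bound)
  moreover have "(\<Sum>m<3. sin_coeff m * t ^ m) = t"
    by (simp add: sin_coeff_def numeral_3_eq_3 lessThan_Suc)
  moreover have "inverse (fact 3) * \<bar>t\<bar> ^ 3 \<le> \<bar>t\<bar>^3"
    by (simp add: fact_numeral)
  ultimately show ?thesis by linarith
qed

lemma cos_bound4: "\<bar>cos t - 1 + t^2/2\<bar> \<le> t^4" for t :: real
proof -
  define a where "a = t/2"
  have "cos t = 1 - 2 * sin a ^ 2" using cos_double_sin[of a] by (simp add: a_def)
  then have e: "cos t - 1 + t^2/2 = 2 * (a - sin a) * (a + sin a)"
    by (simp add: a_def power2_eq_square algebra_simps)
  have b1: "\<bar>a - sin a\<bar> \<le> \<bar>a\<bar>^3" using sin_bound3[of a] by (simp add: abs_minus_commute)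
  have b2: "\<bar>a + sin a\<bar> \<le> 2*\<bar>a\<bar>" using abs_sin_x_le_abs_x[of a] by linarith
  have "\<bar>cos t - 1 + t^2/2\<bar> = 2 * \<bar>a - sin a\<bar> * \<bar>a + sin a\<bar>" unfolding e abs_mult by simp
  also have "\<dots> \<le> 2 * \<bar>a\<bar>^3 * (2*\<bar>a\<bar>)"
    by (intro mult_mono mult_left_mono b1 b2) auto
  also have "\<dots> = t^4 / 4" by (simp add: a_def power_abs field_simps power4_eq_xxxx power3_eq_cube)
  also have "\<dots> \<le> t^4" by simp
  finally show ?thesis .
qed

lemma T1:
  fixes a b :: real
  shows "((\<lambda>u. (cos (a*u + b*u^2) - 1) / u^2) \<longlongrightarrow> - (a^2/2)) (at_right 0)"
proof -
  define w where "w u = a*u + b*u^2" for u :: real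
  have q: "((\<lambda>u. a + b*u) \<longlongrightarrow> a) (at_right 0)"
    by (auto intro!: tendsto_eq_intros)
  have w0: "(w \<longlongrightarrow> 0) (at_right 0)" unfolding w_def
    by (auto intro!: tendsto_eq_intros)
  have R: "((\<lambda>u. (cos (w u) - 1 + (w u)^2/2) / u^2) \<longlongrightarrow> 0) (at_right 0)"
  proof (rule Lim_null_comparison)
    show "eventually (\<lambda>u. norm ((cos (w u) - 1 + (w u)^2/2) / u^2) \<le> (a + b*u)^2 * (w u)^2) (at_right 0)"
    proof (rule eventually_mono[OF eventually_at_right_less])
      fix u :: real assume u: "u > 0"
      have wu: "w u = u * (a + b*u)" by (simp add: w_def power2_eq_square algebra_simps)
      have "norm ((cos (w u) - 1 + (w u)^2/2) / u^2) = \<bar>cos (w u) - 1 + (w u)^2/2\<bar> / u^2"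
        by (simp add: abs_div)
      also have "\<dots> \<le> (w u)^4 / u^2" using cos_bound4[of "w u"] u by (intro divide_right_mono) auto
      also have "\<dots> = (a + b*u)^2 * (w u)^2" using u by (simp add: wu field_simps power2_eq_square power4_eq_xxxx)
      finally show "norm ((cos (w u) - 1 + (w u)^2/2) / u^2) \<le> (a + b*u)^2 * (w u)^2" .
    qed
  next
    show "((\<lambda>u. (a + b*u)^2 * (w u)^2) \<longlongrightarrow> 0) (at_right 0)"
      using tendsto_mult[OF tendsto_power[OF q, of 2] tendsto_power[OF w0, of 2]] by simp
  qed
  have e: "eventually (\<lambda>u. (cos (w u) - 1) / u^2 = (cos (w u) - 1 + (w u)^2/2) / u^2 - (a + b*u)^2/2) (at_right 0)"
  proof (rule eventually_mono[OF eventually_at_right_less])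
    fix u :: real assume "0 < u"
    then show "(cos (w u) - 1) / u^2 = (cos (w u) - 1 + (w u)^2/2) / u^2 - (a + b*u)^2/2"
      by (simp add: w_def field_simps power2_eq_square)
  qed
  have "((\<lambda>u. (cos (w u) - 1 + (w u)^2/2) / u^2 - (a + b*u)^2/2) \<longlongrightarrow> 0 - a^2/2) (at_right 0)"
    by (intro tendsto_intros R q) auto
  then have "((\<lambda>u. (cos (w u) - 1) / u^2) \<longlongrightarrow> - (a^2/2)) (at_right 0)"
    using tendsto_cong[OF e] by simp
  then show ?thesis by (simp add: w_def)
qed

lemma T2:
  fixes a b :: real
  shows "((\<lambda>u. (sin (a*u + b*u^2) - (a*u + b*u^2)) / u^2) \<longlongrightarrow> 0) (at_right 0)"
proof -
  define w where "w u = a*u + b*u^2" for u :: real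
  have q: "((\<lambda>u. a + b*u) \<longlongrightarrow> a) (at_right 0)"
    by (auto intro!: tendsto_eq_intros)
  have w0: "(w \<longlongrightarrow> 0) (at_right 0)" unfolding w_def
    by (auto intro!: tendsto_eq_intros)
  have "((\<lambda>u. (sin (w u) - w u) / u^2) \<longlongrightarrow> 0) (at_right 0)"
  proof (rule Lim_null_comparison)
    show "eventually (\<lambda>u. norm ((sin (w u) - w u) / u^2) \<le> (a + b*u)^2 * \<bar>w u\<bar>) (at_right 0)"
    proof (rule eventually_mono[OF eventually_at_right_less])
      fix u :: real assume u: "u > 0"
      have wu: "w u = u * (a + b*u)" by (simp add: w_def power2_eq_square algebra_simps)
      have "norm ((sin (w u) - w u) / u^2) = \<bar>sin (w u) - w u\<bar> / u^2"
        by (simp add: abs_div)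
      also have "\<dots> \<le> \<bar>w u\<bar>^3 / u^2" using sin_bound3[of "w u"] u by (intro divide_right_mono) auto
      also have "\<dots> = (a + b*u)^2 * \<bar>w u\<bar>" using u
        by (simp add: wu field_simps power2_eq_square power3_eq_cube abs_mult)
      finally show "norm ((sin (w u) - w u) / u^2) \<le> (a + b*u)^2 * \<bar>w u\<bar>" .
    qed
  next
    show "((\<lambda>u. (a + b*u)^2 * \<bar>w u\<bar>) \<longlongrightarrow> 0) (at_right 0)"
      using tendsto_mult[OF tendsto_power[OF q, of 2] tendsto_rabs[OF w0]] by simp
  qed
  then show ?thesis by (simp add: w_def)
qed

definition Gf :: "real \<Rightarrow> real \<Rightarrow> real \<Rightarrow> real \<Rightarrow> real \<Rightarrow> real \<Rightarrow> real \<Rightarrow> real \<Rightarrow> real" where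
  "Gf x y c s1 s2 \<rho> \<kappa> u = cos (x + s1*u) + cos (y + s2*(\<rho>*u + \<kappa>*u^2)) - c"

definition Hf :: "real \<Rightarrow> real \<Rightarrow> real \<Rightarrow> real \<Rightarrow> real \<Rightarrow> real \<Rightarrow> real \<Rightarrow> real" where
  "Hf x y s1 s2 \<rho> \<kappa> u =
     cos x * ((cos (s1*u + 0*u^2) - 1)/u^2) - sin x * ((sin (s1*u + 0*u^2) - (s1*u + 0*u^2))/u^2)
   + cos y * ((cos ((s2*\<rho>)*u + (s2*\<kappa>)*u^2) - 1)/u^2)
   - sin y * ((sin ((s2*\<rho>)*u + (s2*\<kappa>)*u^2) - ((s2*\<rho>)*u + (s2*\<kappa>)*u^2))/u^2)"

lemma G_decomp:
  assumes u: "u \<noteq> 0" and c: "cos x + cos y = c"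
  shows "Gf x y c s1 s2 \<rho> \<kappa> u = - ((s1* sin x + s2*\<rho>* sin y)*u + s2*\<kappa>* sin y*u^2) + u^2 * Hf x y s1 s2 \<rho> \<kappa> u"
proof -
  have "s2*(\<rho>*u + \<kappa>*u^2) = (s2*\<rho>)*u + (s2*\<kappa>)*u^2" by (simp add: algebra_simps)
  then show ?thesis
    using u unfolding Gf_def Hf_def c[symmetric]
    by (simp add: cos_add field_simps power2_eq_square)
qed

lemma H_lim: "(Hf x y s1 s2 \<rho> \<kappa> \<longlongrightarrow> cos x * (- (s1^2/2)) - sin x * 0 + cos y * (- ((s2*\<rho>)^2/2)) - sin y * 0) (at_right 0)"
  unfolding Hf_def[abs_def]
  by (intro tendsto_intros T1 T2)

lemma G_lim0: "((\<lambda>u. Gf x y c s1 s2 \<rho> \<kappa> u) \<longlongrightarrow> cos x + cos y - c) (at_right 0)"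
  unfolding Gf_def by (auto intro!: tendsto_eq_intros)

lemma G_lim1:
  assumes c: "cos x + cos y = c"
  shows "((\<lambda>u. Gf x y c s1 s2 \<rho> \<kappa> u / u) \<longlongrightarrow> - (s1* sin x + s2*\<rho>* sin y)) (at_right 0)"
proof -
  have e: "eventually (\<lambda>u. - (s1* sin x + s2*\<rho>* sin y) - s2*\<kappa>* sin y*u + u * Hf x y s1 s2 \<rho> \<kappa> u = Gf x y c s1 s2 \<rho> \<kappa> u / u) (at_right 0)"
  proof (rule eventually_mono[OF eventually_at_right_less])
    fix u :: real assume "0 < u"
    then show "- (s1* sin x + s2*\<rho>* sin y) - s2*\<kappa>* sin y*u + u * Hf x y s1 s2 \<rho> \<kappa> u = Gf x y c s1 s2 \<rho> \<kappa> u / u"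
      using G_decomp[OF _ c, of u s1 s2 \<rho> \<kappa>] by (simp add: field_simps power2_eq_square)
  qed
  have "((\<lambda>u. - (s1* sin x + s2*\<rho>* sin y) - s2*\<kappa>* sin y*u + u * Hf x y s1 s2 \<rho> \<kappa> u) \<longlongrightarrow> - (s1* sin x + s2*\<rho>* sin y) - s2*\<kappa>* sin y*0 + 0 * (cos x * (- (s1^2/2)) - sin x * 0 + cos y * (- ((s2*\<rho>)^2/2)) - sin y * 0)) (at_right 0)"
    by (intro tendsto_intros H_lim)
  then show ?thesis using tendsto_cong[OF e] by simp
qed

lemma G_lim2:
  assumes c: "cos x + cos y = c" and A: "s1* sin x + s2*\<rho>* sin y = 0"
  shows "((\<lambda>u. Gf x y c s1 s2 \<rho> \<kappa> u / u^2) \<longlongrightarrow> - s2*\<kappa>* sin y - (cos x * (s1^2/2)) - cos y * ((s2*\<rho>)^2/2)) (at_right 0)"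
proof -
  have e: "eventually (\<lambda>u. - s2*\<kappa>* sin y + Hf x y s1 s2 \<rho> \<kappa> u = Gf x y c s1 s2 \<rho> \<kappa> u / u^2) (at_right 0)"
  proof (rule eventually_mono[OF eventually_at_right_less])
    fix u :: real assume "0 < u"
    assume u: "0 < u"
    have "Gf x y c s1 s2 \<rho> \<kappa> u = - (s2*\<kappa>* sin y*u^2) + u^2 * Hf x y s1 s2 \<rho> \<kappa> u"
      using G_decomp[OF _ c, of u s1 s2 \<rho> \<kappa>] A u by simp
    then show "- s2*\<kappa>* sin y + Hf x y s1 s2 \<rho> \<kappa> u = Gf x y c s1 s2 \<rho> \<kappa> u / u^2"
      using u by (simp add: field_simps power2_eq_square)
  qed
  have "((\<lambda>u. - s2*\<kappa>* sin y + Hf x y s1 s2 \<rho> \<kappa> u) \<longlongrightarrow> - s2*\<kappa>* sin y + (cos x * (- (s1^2/2)) - sin x * 0 + cos y * (- ((s2*\<rho>)^2/2)) - sin y * 0)) (at_right 0)"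
    by (intro tendsto_intros H_lim)
  then have "((\<lambda>u. Gf x y c s1 s2 \<rho> \<kappa> u / u^2) \<longlongrightarrow> - s2*\<kappa>* sin y + (cos x * (- (s1^2/2)) - sin x * 0 + cos y * (- ((s2*\<rho>)^2/2)) - sin y * 0)) (at_right 0)"
    using tendsto_cong[OF e] by simp
  then show ?thesis by (simp add: algebra_simps)
qed

lemma ev_neg_from_div:
  fixes g :: "real \<Rightarrow> real"
  assumes "((\<lambda>u. g u / d u) \<longlongrightarrow> L) (at_right 0)" "L < 0" "eventually (\<lambda>u. d u > 0) (at_right 0)"
  shows "eventually (\<lambda>u. g u < 0) (at_right 0)"
proof -
  have "eventually (\<lambda>u. g u / d u < 0) (at_right 0)" using order_tendstoD(2)[OF assms(1,2)] .
  then show ?thesis using assms(3) by eventually_elim (simp add: divide_less_0_iff)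
qed

lemma ev_pos_from_div:
  fixes g :: "real \<Rightarrow> real"
  assumes "((\<lambda>u. g u / d u) \<longlongrightarrow> L) (at_right 0)" "L > 0" "eventually (\<lambda>u. d u > 0) (at_right 0)"
  shows "eventually (\<lambda>u. g u > 0) (at_right 0)"
proof -
  have "eventually (\<lambda>u. g u / d u > 0) (at_right 0)" using order_tendstoD(1)[OF assms(1,2)] .
  then show ?thesis using assms(3) by eventually_elim (simp add: zero_less_divide_iff)
qed

lemma ev_upos: "eventually (\<lambda>u::real. u > 0) (at_right 0)" by (rule eventually_at_right_less)
lemma ev_u2pos: "eventually (\<lambda>u::real. u^2 > 0) (at_right 0)"
  by (rule eventually_mono[OF eventually_at_right_less]) simp

lemma G_sign:
  fixes x y c s1 s2 \<rho> \<kappa> :: real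
  defines "A \<equiv> s1* sin x + s2*\<rho>* sin y"
  defines "D \<equiv> (s1^2 * cos x + (s2*\<rho>)^2 * cos y)/2 + s2*\<kappa>* sin y"
  shows "cos x + cos y < c \<Longrightarrow> eventually (\<lambda>u. Gf x y c s1 s2 \<rho> \<kappa> u < 0) (at_right 0)"
    and "cos x + cos y > c \<Longrightarrow> eventually (\<lambda>u. Gf x y c s1 s2 \<rho> \<kappa> u > 0) (at_right 0)"
    and "cos x + cos y = c \<Longrightarrow> A > 0 \<Longrightarrow> eventually (\<lambda>u. Gf x y c s1 s2 \<rho> \<kappa> u < 0) (at_right 0)"
    and "cos x + cos y = c \<Longrightarrow> A < 0 \<Longrightarrow> eventually (\<lambda>u. Gf x y c s1 s2 \<rho> \<kappa> u > 0) (at_right 0)"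
    and "cos x + cos y = c \<Longrightarrow> A = 0 \<Longrightarrow> D > 0 \<Longrightarrow> eventually (\<lambda>u. Gf x y c s1 s2 \<rho> \<kappa> u < 0) (at_right 0)"
    and "cos x + cos y = c \<Longrightarrow> A = 0 \<Longrightarrow> D < 0 \<Longrightarrow> eventually (\<lambda>u. Gf x y c s1 s2 \<rho> \<kappa> u > 0) (at_right 0)"
proof -
  show "cos x + cos y < c \<Longrightarrow> eventually (\<lambda>u. Gf x y c s1 s2 \<rho> \<kappa> u < 0) (at_right 0)"
    using order_tendstoD(2)[OF G_lim0[of x y c s1 s2 \<rho> \<kappa>]] by simp
  show "cos x + cos y > c \<Longrightarrow> eventually (\<lambda>u. Gf x y c s1 s2 \<rho> \<kappa> u > 0) (at_right 0)"
    using order_tendstoD(1)[OF G_lim0[of x y c s1 s2 \<rho> \<kappa>]] by simp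
  show "cos x + cos y = c \<Longrightarrow> A > 0 \<Longrightarrow> eventually (\<lambda>u. Gf x y c s1 s2 \<rho> \<kappa> u < 0) (at_right 0)"
    unfolding A_def by (rule ev_neg_from_div[OF G_lim1 _ ev_upos]) auto
  show "cos x + cos y = c \<Longrightarrow> A < 0 \<Longrightarrow> eventually (\<lambda>u. Gf x y c s1 s2 \<rho> \<kappa> u > 0) (at_right 0)"
    unfolding A_def by (rule ev_pos_from_div[OF G_lim1 _ ev_upos]) auto
  show "cos x + cos y = c \<Longrightarrow> A = 0 \<Longrightarrow> D > 0 \<Longrightarrow> eventually (\<lambda>u. Gf x y c s1 s2 \<rho> \<kappa> u < 0) (at_right 0)"
  proof -
    assume h: "cos x + cos y = c" "A = 0" "D > 0"
    have "- s2*\<kappa>* sin y - (cos x * (s1^2/2)) - cos y * ((s2*\<rho>)^2/2) < 0"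
      using h(3) unfolding D_def by (simp add: field_simps)
    then show ?thesis using h unfolding A_def by (intro ev_neg_from_div[OF G_lim2 _ ev_u2pos]) auto
  qed
  show "cos x + cos y = c \<Longrightarrow> A = 0 \<Longrightarrow> D < 0 \<Longrightarrow> eventually (\<lambda>u. Gf x y c s1 s2 \<rho> \<kappa> u > 0) (at_right 0)"
  proof -
    assume h: "cos x + cos y = c" "A = 0" "D < 0"
    have "- s2*\<kappa>* sin y - (cos x * (s1^2/2)) - cos y * ((s2*\<rho>)^2/2) > 0"
      using h(3) unfolding D_def by (simp add: field_simps)
    then show ?thesis using h unfolding A_def by (intro ev_pos_from_div[OF G_lim2 _ ev_u2pos]) auto
  qed
qed


lemma sin0_cos: "sin (x::real) = 0 \<Longrightarrow> cos x = 1 \<or> cos x = -1"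
proof -
  assume "sin x = 0"
  then have "cos x ^ 2 = 1" using sin_cos_squared_add[of x] by simp
  then show ?thesis by (simp add: power2_eq_1_iff)
qed

lemma sin_ne0_cos: "sin (x::real) \<noteq> 0 \<Longrightarrow> \<bar>cos x\<bar> < 1"
proof -
  assume "sin x \<noteq> 0"
  then have "sin x ^ 2 > 0" by simp
  then have "cos x ^ 2 < 1" using sin_cos_squared_add[of x] by linarith
  then show ?thesis by (simp add: abs_square_less_1)
qed

lemma crit_sign:
  fixes x y c s1 s2 \<rho> :: real
  assumes s1: "s1^2 = 1" and s2: "s2^2 = 1" and \<rho>: "\<rho> \<ge> 0" and f: "cos x + cos y = c" and c: "c \<noteq> 0"
    and A: "s1 * sin x + s2*\<rho> * sin y = 0" and nc: "\<not> (sin x = 0 \<and> sin y = 0)"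
  shows "c * ((s1^2 * cos x + (s2*\<rho>)^2 * cos y)/2) > 0"
proof -
  have s1v: "s1 = 1 \<or> s1 = -1" using s1 by (simp add: power2_eq_1_iff)
  have s2v: "s2 = 1 \<or> s2 = -1" using s2 by (simp add: power2_eq_1_iff)
  have D: "(s1^2 * cos x + (s2*\<rho>)^2 * cos y)/2 = (cos x + \<rho>^2 * cos y)/2"
    using s1 s2 by (simp add: power_mult_distrib)
  show ?thesis
  proof (cases "\<rho> = 0")
    case True
    then have sx: "sin x = 0" using A s1v by auto
    then have sy: "sin y \<noteq> 0" using nc by simp
    have cy: "\<bar>cos y\<bar> < 1" by (rule sin_ne0_cos[OF sy])
    from sin0_cos[OF sx] show ?thesis
    proof
      assume "cos x = 1"
      then have "c > 0" "(cos x + \<rho>^2 * cos y)/2 > 0" using f cy True by auto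
      then show ?thesis using D by simp
    next
      assume "cos x = -1"
      then have "c < 0" "(cos x + \<rho>^2 * cos y)/2 < 0" using f cy True by auto
      then show ?thesis using D by (simp add: mult_neg_neg)
    qed
  next
    case False
    then have \<rho>0: "\<rho> > 0" using \<rho> by simp
    have sy: "sin y \<noteq> 0"
    proof
      assume "sin y = 0"
      then have "sin x = 0" using A s1v by auto
      then show False using nc \<open>sin y = 0\<close> by simp
    qed
    have "s1 * sin x = - (s2*\<rho>* sin y)" using A by linarith
    then have "(s1 * sin x)^2 = (s2*\<rho>* sin y)^2" by (simp only: power2_minus)
    then have "s1^2 * sin x^2 = s2^2 * \<rho>^2 * sin y^2" by (simp only: power_mult_distrib)
    then have sq: "sin x ^2 = \<rho>^2 * sin y ^2" unfolding s1 s2 by simp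
    have "\<rho>^2 * sin y^2 > 0" using \<rho>0 sy by simp
    then have "sin x ^2 > 0" using sq by simp
    then have sx: "sin x \<noteq> 0" by auto
    have cx: "\<bar>cos x\<bar> < 1" by (rule sin_ne0_cos[OF sx])
    have cyb: "\<bar>cos y\<bar> \<le> 1" by simp
    have "\<bar>cos x\<bar> * \<bar>cos y\<bar> \<le> \<bar>cos x\<bar> * 1" using cyb by (intro mult_left_mono) auto
    then have "\<bar>cos x * cos y\<bar> < 1" using cx by (simp add: abs_mult)
    then have p: "1 - cos x * cos y > 0" by linarith
    have "(cos x + \<rho>^2 * cos y) * sin y ^2 = cos x * sin y^2 + sin x^2 * cos y" using sq by (simp add: algebra_simps)
    also have "\<dots> = cos x * (1 - cos y^2) + (1 - cos x^2) * cos y" by (simp add: sin_squared_eq)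
    also have "\<dots> = (cos x + cos y) * (1 - cos x * cos y)" by (simp add: algebra_simps power2_eq_square)
    also have "\<dots> = c * (1 - cos x * cos y)" using f by simp
    finally have e: "(cos x + \<rho>^2 * cos y) * sin y ^2 = c * (1 - cos x * cos y)" .
    have sy2: "sin y ^ 2 > 0" using sy by simp
    have "c * c > 0" using c by (simp add: zero_less_mult_iff linorder_neq_iff) blast
    then have "c * (c * (1 - cos x * cos y)) > 0" using p
      by (simp add: mult.assoc[symmetric])
    then have "(c * (cos x + \<rho>^2 * cos y)) * sin y ^2 > 0" using e by (simp add: mult.assoc)
    then have "c * (cos x + \<rho>^2 * cos y) > 0" using sy2 by (simp add: zero_less_mult_iff)
    then show ?thesis unfolding D by simp
  qed
qed


definition lamf :: "(nat \<Rightarrow> real) \<Rightarrow> nat \<Rightarrow> nat \<Rightarrow> real" where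
  "lamf f N j = sorted_list_of_multiset (mset (map f [0..<N])) ! (j-1)"

lemma count_prefix:
  assumes j: "1 \<le> j" "j \<le> N" and dc: "\<And>a b. b \<le> a \<Longrightarrow> P a \<Longrightarrow> P b"
  shows "(j \<le> card {i. i < N \<and> P (f i)}) \<longleftrightarrow> P (lamf f N j)"
proof -
  define xs where "xs = sorted_list_of_multiset (mset (map f [0..<N]))"
  have s: "sorted xs" unfolding xs_def by simp
  have m: "mset xs = mset (map f [0..<N])" unfolding xs_def by simp
  have len: "length xs = N" using arg_cong[OF m, of size] by simp
  have "card {i. i < N \<and> P (f i)} = length (filter P (map f [0..<N]))"
    by (simp add: length_filter_conv_card, rule arg_cong[where f=card], auto)
  also have "\<dots> = size (filter_mset P (mset (map f [0..<N])))"
    by (metis mset_filter size_mset)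
  also have "\<dots> = length (filter P xs)"
    by (metis m mset_filter size_mset)
  also have "\<dots> = card {i. i < N \<and> P (xs ! i)}"
    by (simp add: length_filter_conv_card len)
  finally have c: "card {i. i < N \<and> P (f i)} = card {i. i < N \<and> P (xs ! i)}" .
  show ?thesis
  proof
    assume "j \<le> card {i. i < N \<and> P (f i)}"
    then have jc: "j \<le> card {i. i < N \<and> P (xs ! i)}" using c by simp
    show "P (lamf f N j)"
    proof (rule ccontr)
      assume np: "\<not> P (lamf f N j)"
      have "{i. i < N \<and> P (xs ! i)} \<subseteq> {..<j-1}"
      proof
        fix i assume i: "i \<in> {i. i < N \<and> P (xs ! i)}"
        show "i \<in> {..<j-1}"
        proof (rule ccontr)
          assume "i \<notin> {..<j-1}"
          then have "j - 1 \<le> i" by simp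
          then have "xs ! (j-1) \<le> xs ! i" using s i len by (intro sorted_nth_mono) auto
          then have "P (xs ! (j-1))" using dc i by blast
          then show False using np by (simp add: lamf_def xs_def)
        qed
      qed
      then have "card {i. i < N \<and> P (xs ! i)} \<le> j - 1" by (metis card_lessThan card_mono finite_lessThan)
      then show False using jc j by simp
    qed
  next
    assume p: "P (lamf f N j)"
    have "{..<j} \<subseteq> {i. i < N \<and> P (xs ! i)}"
    proof
      fix i assume "i \<in> {..<j}"
      then have i: "i \<le> j - 1" "i < N" using j by auto
      then have "xs ! i \<le> xs ! (j-1)" using s len j by (intro sorted_nth_mono) auto
      then show "i \<in> {i. i < N \<and> P (xs ! i)}" using dc p i by (auto simp: lamf_def xs_def)
    qed
    then have "j \<le> card {i. i < N \<and> P (xs ! i)}" by (metis card_lessThan card_mono finite_Collect_conjI finite_lessThan lessThan_def)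
    then show "j \<le> card {i. i < N \<and> P (f i)}" using c by simp
  qed
qed

lemma lamf_lt: "1 \<le> j \<Longrightarrow> j \<le> N \<Longrightarrow> (j \<le> card {i. i < N \<and> f i < y}) \<longleftrightarrow> lamf f N j < y"
  by (rule count_prefix[where P = "\<lambda>x. x < y"]) auto

lemma lamf_le: "1 \<le> j \<Longrightarrow> j \<le> N \<Longrightarrow> (j \<le> card {i. i < N \<and> f i \<le> y}) \<longleftrightarrow> lamf f N j \<le> y"
  by (rule count_prefix[where P = "\<lambda>x. x \<le> y"]) auto

lemma lamf_continuous:
  assumes j: "1 \<le> j" "j \<le> N" and c: "\<And>i. i < N \<Longrightarrow> continuous_on S (\<lambda>s. f s i)"
  shows "continuous_on S (\<lambda>s. lamf (f s) N j)"
  unfolding continuous_on_def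
proof (intro ballI order_tendstoI)
  fix x assume x: "x \<in> S"
  have t: "((\<lambda>s. f s i) \<longlongrightarrow> f x i) (at x within S)" if "i < N" for i
    using c[OF that] x by (simp add: continuous_on_def)
  fix a
  {
    assume a: "lamf (f x) N j < a"
    define A where "A = {i. i < N \<and> f x i < a}"
    have jA: "j \<le> card A" using a lamf_lt[OF j] by (simp add: A_def)
    have "\<forall>i\<in>A. eventually (\<lambda>s. f s i < a) (at x within S)"
      by (auto simp: A_def intro!: order_tendstoD(2)[OF t])
    then have ev: "eventually (\<lambda>s. \<forall>i\<in>A. f s i < a) (at x within S)"
      by (intro eventually_ball_finite) (auto simp: A_def)
    show "eventually (\<lambda>s. lamf (f s) N j < a) (at x within S)"
    proof (rule eventually_mono[OF ev])
      fix s assume h: "\<forall>i\<in>A. f s i < a"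
      have "A \<subseteq> {i. i < N \<and> f s i < a}" using h by (auto simp: A_def)
      then have "card A \<le> card {i. i < N \<and> f s i < a}" by (intro card_mono) auto
      then show "lamf (f s) N j < a" using jA lamf_lt[OF j, of "f s" a] by simp
    qed
  }
  {
    assume a: "a < lamf (f x) N j"
    define A where "A = {i. i < N \<and> f x i \<le> a}"
    have jA: "card A < j" using a lamf_le[OF j, of "f x" a] by (simp add: A_def)
    have "\<forall>i\<in>{i. i < N \<and> a < f x i}. eventually (\<lambda>s. a < f s i) (at x within S)"
      by (auto intro!: order_tendstoD(1)[OF t])
    then have ev: "eventually (\<lambda>s. \<forall>i\<in>{i. i < N \<and> a < f x i}. a < f s i) (at x within S)"
      by (intro eventually_ball_finite) auto
    show "eventually (\<lambda>s. a < lamf (f s) N j) (at x within S)"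
    proof (rule eventually_mono[OF ev])
      fix s assume h: "\<forall>i\<in>{i. i < N \<and> a < f x i}. a < f s i"
      have "{i. i < N \<and> f s i \<le> a} \<subseteq> A" using h by (auto simp: A_def not_le[symmetric])
      then have "card {i. i < N \<and> f s i \<le> a} \<le> card A" by (intro card_mono) (auto simp: A_def)
      then show "a < lamf (f s) N j" using jA lamf_le[OF j, of "f s" a] by simp
    qed
  }
qed


lemma alph_shift: "r > 0 \<Longrightarrow> alph r (t0 + s*real r*u) k = alph r t0 k + s*u"
  by (simp add: alph_def field_simps)

lemma ev_path:
  assumes r: "r > 0"
  shows "ev r (\<theta>0 + s1*real r*u) (\<phi>0 + s2*real r*(\<rho>*u + \<kappa>*u^2)) i
     = 2 * (Gf (alph r \<theta>0 (i div r)) (alph r \<phi>0 (i mod r)) c s1 s2 \<rho> \<kappa> u + c)"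
proof -
  have "alph r (\<phi>0 + s2*real r*(\<rho>*u + \<kappa>*u^2)) (i mod r) = alph r \<phi>0 (i mod r) + s2*(\<rho>*u + \<kappa>*u^2)"
    using r by (simp add: alph_def field_simps)
  then show ?thesis using alph_shift[OF r, of \<theta>0 s1 u]
    by (simp add: ev_def Gf_def)
qed

lemma core:
  fixes r :: nat and \<theta>0 \<phi>0 c s1 s2 \<rho> K :: real and i0 :: nat
  defines "X \<equiv> \<lambda>i. alph r \<theta>0 (i div r)" and "Y \<equiv> \<lambda>i. alph r \<phi>0 (i mod r)"
  assumes r: "r > 0" and c: "c \<noteq> 0" and s1: "s1^2 = 1" and s2: "s2^2 = 1" and \<rho>: "\<rho> \<ge> 0"
    and nc: "\<forall>i<r*r. \<not> (sin (X i) = 0 \<and> sin (Y i) = 0 \<and> cos (X i) + cos (Y i) = c)"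
    and i0: "i0 < r*r" "cos (X i0) + cos (Y i0) = c" "s1 * sin (X i0) + s2*\<rho> * sin (Y i0) = 0"
    and K: "s2 * K * sin (Y i0) = - (s1^2 * cos (X i0) + (s2*\<rho>)^2 * cos (Y i0))"
    and valid: "eventually (\<lambda>u. \<theta>0 + s1*real r*u \<in> {0..pi} \<and> \<phi>0 + s2*real r*(\<rho>*u + 0*u^2) \<in> {0..pi}
                    \<and> \<phi>0 + s2*real r*(\<rho>*u + K*u^2) \<in> {0..pi}) (at_right 0)"
  shows "\<exists>\<theta>p \<phi>p \<theta>q \<phi>q. \<theta>p \<in> {0..pi} \<and> \<phi>p \<in> {0..pi} \<and> \<theta>q \<in> {0..pi} \<and> \<phi>q \<in> {0..pi} \<and>
     card {i. i < r*r \<and> ev r \<theta>p \<phi>p i \<le> 2*c} < card {i. i < r*r \<and> ev r \<theta>q \<phi>q i < 2*c}"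
proof -
  define N where "N = r*r"
  define G where "G \<kappa> i u = Gf (X i) (Y i) c s1 s2 \<rho> \<kappa> u" for \<kappa> i u
  define D0 where "D0 i = (s1^2 * cos (X i) + (s2*\<rho>)^2 * cos (Y i))/2" for i
  have evG: "ev r (\<theta>0 + s1*real r*u) (\<phi>0 + s2*real r*(\<rho>*u + \<kappa>*u^2)) i = 2 * (G \<kappa> i u + c)" for \<kappa> i u
    unfolding G_def X_def Y_def by (rule ev_path[OF r])
  have evG0: "ev r (\<theta>0 + s1*real r*u) (\<phi>0 + s2*real r*(\<rho>*u)) i = 2 * (G 0 i u + c)" for i u
    using evG[of u 0 i] by simp
  have crit: "c * D0 i > 0" if "i < N" "cos (X i) + cos (Y i) = c" "s1 * sin (X i) + s2*\<rho> * sin (Y i) = 0" for i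
    unfolding D0_def using crit_sign[OF s1 s2 \<rho> that(2) c that(3)] nc that unfolding N_def by blast
  have DK: "(s1^2 * cos (X i0) + (s2*\<rho>)^2 * cos (Y i0))/2 + s2*K* sin (Y i0) = - D0 i0"
    using K unfolding D0_def by (simp add: field_simps)
  have D00: "(s1^2 * cos (X i) + (s2*\<rho>)^2 * cos (Y i))/2 + s2*0* sin (Y i) = D0 i" for i
    unfolding D0_def by simp
  note GS = G_sign[of "X i" "Y i" c for i]
  have i0N: "i0 < N" using i0 by (simp add: N_def)
  have c0: "c * D0 i0 > 0" using crit[OF i0N i0(2,3)] .
  show ?thesis
  proof (cases "c > 0")
    case True
    have per: "eventually (\<lambda>u. G K i u \<le> 0 \<longrightarrow> G 0 i u < 0) (at_right 0)" if "i < N" for i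
    proof -
      consider "cos (X i) + cos (Y i) < c" | "cos (X i) + cos (Y i) > c"
        | "cos (X i) + cos (Y i) = c" "s1 * sin (X i) + s2*\<rho> * sin (Y i) > 0"
        | "cos (X i) + cos (Y i) = c" "s1 * sin (X i) + s2*\<rho> * sin (Y i) < 0"
        | "cos (X i) + cos (Y i) = c" "s1 * sin (X i) + s2*\<rho> * sin (Y i) = 0"
        by (meson linorder_neqE_linordered_idom)
      then show ?thesis
      proof cases
        case 1 then show ?thesis unfolding G_def
          by (intro eventually_mono[OF G_sign(1)[where x="X i" and y="Y i" and c=c and ?s1.0=s1 and ?s2.0=s2 and \<rho>=\<rho> and \<kappa>=0]]) auto
      next
        case 2 then show ?thesis unfolding G_def
          by (intro eventually_mono[OF G_sign(2)[where x="X i" and y="Y i" and c=c and ?s1.0=s1 and ?s2.0=s2 and \<rho>=\<rho> and \<kappa>=K]]) auto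
      next
        case 3 then show ?thesis unfolding G_def
          by (intro eventually_mono[OF G_sign(3)[where x="X i" and y="Y i" and c=c and ?s1.0=s1 and ?s2.0=s2 and \<rho>=\<rho> and \<kappa>=0]]) auto
      next
        case 4 then show ?thesis unfolding G_def
          by (intro eventually_mono[OF G_sign(4)[where x="X i" and y="Y i" and c=c and ?s1.0=s1 and ?s2.0=s2 and \<rho>=\<rho> and \<kappa>=K]]) auto
      next
        case 5
        have "D0 i > 0" using crit[OF that 5] True by (simp add: zero_less_mult_iff)
        then show ?thesis unfolding G_def using 5 D00[of i]
          by (intro eventually_mono[OF G_sign(5)[where x="X i" and y="Y i" and c=c and ?s1.0=s1 and ?s2.0=s2 and \<rho>=\<rho> and \<kappa>=0]]) auto
      qed
    qed
    have e1: "eventually (\<lambda>u. \<forall>i\<in>{..<N}. G K i u \<le> 0 \<longrightarrow> G 0 i u < 0) (at_right 0)"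
      using per by (intro eventually_ball_finite) auto
    have "D0 i0 > 0" using c0 True by (simp add: zero_less_mult_iff)
    then have e2: "eventually (\<lambda>u. G K i0 u > 0) (at_right 0)"
      unfolding G_def using i0 DK by (intro G_sign(6)[where x="X i0" and y="Y i0" and c=c and ?s1.0=s1 and ?s2.0=s2 and \<rho>=\<rho> and \<kappa>=K]) auto
    have e3: "eventually (\<lambda>u. G 0 i0 u < 0) (at_right 0)"
      unfolding G_def using i0 D00[of i0] \<open>D0 i0 > 0\<close> by (intro G_sign(5)[where x="X i0" and y="Y i0" and c=c and ?s1.0=s1 and ?s2.0=s2 and \<rho>=\<rho> and \<kappa>=0]) auto
    have "eventually (\<lambda>u. (\<forall>i\<in>{..<N}. G K i u \<le> 0 \<longrightarrow> G 0 i u < 0) \<and> G K i0 u > 0 \<and> G 0 i0 u < 0 \<and>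
       (\<theta>0 + s1*real r*u \<in> {0..pi} \<and> \<phi>0 + s2*real r*(\<rho>*u + 0*u^2) \<in> {0..pi}
                    \<and> \<phi>0 + s2*real r*(\<rho>*u + K*u^2) \<in> {0..pi})) (at_right 0)"
      using e1 e2 e3 valid by eventually_elim blast
    from eventually_happens[OF this] have "\<exists>u. (\<forall>i\<in>{..<N}. G K i u \<le> 0 \<longrightarrow> G 0 i u < 0) \<and> G K i0 u > 0 \<and> G 0 i0 u < 0 \<and>
       (\<theta>0 + s1*real r*u \<in> {0..pi} \<and> \<phi>0 + s2*real r*(\<rho>*u + 0*u^2) \<in> {0..pi}
                    \<and> \<phi>0 + s2*real r*(\<rho>*u + K*u^2) \<in> {0..pi})" by simp
    then obtain u where u: "\<forall>i\<in>{..<N}. G K i u \<le> 0 \<longrightarrow> G 0 i u < 0" "G K i0 u > 0" "G 0 i0 u < 0"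
       "\<theta>0 + s1*real r*u \<in> {0..pi}" "\<phi>0 + s2*real r*(\<rho>*u + 0*u^2) \<in> {0..pi}"
       "\<phi>0 + s2*real r*(\<rho>*u + K*u^2) \<in> {0..pi}"
      by blast
    have sub: "{i. i < N \<and> ev r (\<theta>0 + s1*real r*u) (\<phi>0 + s2*real r*(\<rho>*u + K*u^2)) i \<le> 2*c}
       \<subset> {i. i < N \<and> ev r (\<theta>0 + s1*real r*u) (\<phi>0 + s2*real r*(\<rho>*u + 0*u^2)) i < 2*c}"
    proof -
      have "i0 \<in> {i. i < N \<and> ev r (\<theta>0 + s1*real r*u) (\<phi>0 + s2*real r*(\<rho>*u + 0*u^2)) i < 2*c}"
           "i0 \<notin> {i. i < N \<and> ev r (\<theta>0 + s1*real r*u) (\<phi>0 + s2*real r*(\<rho>*u + K*u^2)) i \<le> 2*c}"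
        using u i0N by (auto simp: evG evG0)
      moreover have "{i. i < N \<and> ev r (\<theta>0 + s1*real r*u) (\<phi>0 + s2*real r*(\<rho>*u + K*u^2)) i \<le> 2*c}
       \<subseteq> {i. i < N \<and> ev r (\<theta>0 + s1*real r*u) (\<phi>0 + s2*real r*(\<rho>*u + 0*u^2)) i < 2*c}"
        using u(1) by (auto simp: evG evG0)
      ultimately show ?thesis by blast
    qed
    have "card {i. i < N \<and> ev r (\<theta>0 + s1*real r*u) (\<phi>0 + s2*real r*(\<rho>*u + K*u^2)) i \<le> 2*c}
       < card {i. i < N \<and> ev r (\<theta>0 + s1*real r*u) (\<phi>0 + s2*real r*(\<rho>*u + 0*u^2)) i < 2*c}"
      by (rule psubset_card_mono[OF _ sub]) simp
    then show ?thesis using u(4-6) unfolding N_def by blast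
  next
    case False
    then have cn: "c < 0" using c by simp
    have per: "eventually (\<lambda>u. G 0 i u \<le> 0 \<longrightarrow> G K i u < 0) (at_right 0)" if "i < N" for i
    proof -
      consider "cos (X i) + cos (Y i) < c" | "cos (X i) + cos (Y i) > c"
        | "cos (X i) + cos (Y i) = c" "s1 * sin (X i) + s2*\<rho> * sin (Y i) > 0"
        | "cos (X i) + cos (Y i) = c" "s1 * sin (X i) + s2*\<rho> * sin (Y i) < 0"
        | "cos (X i) + cos (Y i) = c" "s1 * sin (X i) + s2*\<rho> * sin (Y i) = 0"
        by (meson linorder_neqE_linordered_idom)
      then show ?thesis
      proof cases
        case 1 then show ?thesis unfolding G_def
          by (intro eventually_mono[OF G_sign(1)[where x="X i" and y="Y i" and c=c and ?s1.0=s1 and ?s2.0=s2 and \<rho>=\<rho> and \<kappa>=K]]) auto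
      next
        case 2 then show ?thesis unfolding G_def
          by (intro eventually_mono[OF G_sign(2)[where x="X i" and y="Y i" and c=c and ?s1.0=s1 and ?s2.0=s2 and \<rho>=\<rho> and \<kappa>=0]]) auto
      next
        case 3 then show ?thesis unfolding G_def
          by (intro eventually_mono[OF G_sign(3)[where x="X i" and y="Y i" and c=c and ?s1.0=s1 and ?s2.0=s2 and \<rho>=\<rho> and \<kappa>=K]]) auto
      next
        case 4 then show ?thesis unfolding G_def
          by (intro eventually_mono[OF G_sign(4)[where x="X i" and y="Y i" and c=c and ?s1.0=s1 and ?s2.0=s2 and \<rho>=\<rho> and \<kappa>=0]]) auto
      next
        case 5
        have "D0 i < 0" using crit[OF that 5] cn by (simp add: zero_less_mult_iff)
        then show ?thesis unfolding G_def using 5 D00[of i]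
          by (intro eventually_mono[OF G_sign(6)[where x="X i" and y="Y i" and c=c and ?s1.0=s1 and ?s2.0=s2 and \<rho>=\<rho> and \<kappa>=0]]) auto
      qed
    qed
    have e1: "eventually (\<lambda>u. \<forall>i\<in>{..<N}. G 0 i u \<le> 0 \<longrightarrow> G K i u < 0) (at_right 0)"
      using per by (intro eventually_ball_finite) auto
    have "D0 i0 < 0" using c0 cn by (simp add: zero_less_mult_iff)
    then have e2: "eventually (\<lambda>u. G K i0 u < 0) (at_right 0)"
      unfolding G_def using i0 DK by (intro G_sign(5)[where x="X i0" and y="Y i0" and c=c and ?s1.0=s1 and ?s2.0=s2 and \<rho>=\<rho> and \<kappa>=K]) auto
    have e3: "eventually (\<lambda>u. G 0 i0 u > 0) (at_right 0)"
      unfolding G_def using i0 D00[of i0] \<open>D0 i0 < 0\<close> by (intro G_sign(6)[where x="X i0" and y="Y i0" and c=c and ?s1.0=s1 and ?s2.0=s2 and \<rho>=\<rho> and \<kappa>=0]) auto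
    have "eventually (\<lambda>u. (\<forall>i\<in>{..<N}. G 0 i u \<le> 0 \<longrightarrow> G K i u < 0) \<and> G K i0 u < 0 \<and> G 0 i0 u > 0 \<and>
       (\<theta>0 + s1*real r*u \<in> {0..pi} \<and> \<phi>0 + s2*real r*(\<rho>*u + 0*u^2) \<in> {0..pi}
                    \<and> \<phi>0 + s2*real r*(\<rho>*u + K*u^2) \<in> {0..pi})) (at_right 0)"
      using e1 e2 e3 valid by eventually_elim blast
    from eventually_happens[OF this] have "\<exists>u. (\<forall>i\<in>{..<N}. G 0 i u \<le> 0 \<longrightarrow> G K i u < 0) \<and> G K i0 u < 0 \<and> G 0 i0 u > 0 \<and>
       (\<theta>0 + s1*real r*u \<in> {0..pi} \<and> \<phi>0 + s2*real r*(\<rho>*u + 0*u^2) \<in> {0..pi}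
                    \<and> \<phi>0 + s2*real r*(\<rho>*u + K*u^2) \<in> {0..pi})" by simp
    then obtain u where u: "\<forall>i\<in>{..<N}. G 0 i u \<le> 0 \<longrightarrow> G K i u < 0" "G K i0 u < 0" "G 0 i0 u > 0"
       "\<theta>0 + s1*real r*u \<in> {0..pi}" "\<phi>0 + s2*real r*(\<rho>*u + 0*u^2) \<in> {0..pi}"
       "\<phi>0 + s2*real r*(\<rho>*u + K*u^2) \<in> {0..pi}"
      by blast
    have sub: "{i. i < N \<and> ev r (\<theta>0 + s1*real r*u) (\<phi>0 + s2*real r*(\<rho>*u + 0*u^2)) i \<le> 2*c}
       \<subset> {i. i < N \<and> ev r (\<theta>0 + s1*real r*u) (\<phi>0 + s2*real r*(\<rho>*u + K*u^2)) i < 2*c}"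
    proof -
      have "i0 \<in> {i. i < N \<and> ev r (\<theta>0 + s1*real r*u) (\<phi>0 + s2*real r*(\<rho>*u + K*u^2)) i < 2*c}"
           "i0 \<notin> {i. i < N \<and> ev r (\<theta>0 + s1*real r*u) (\<phi>0 + s2*real r*(\<rho>*u + 0*u^2)) i \<le> 2*c}"
        using u i0N by (auto simp: evG evG0)
      moreover have "{i. i < N \<and> ev r (\<theta>0 + s1*real r*u) (\<phi>0 + s2*real r*(\<rho>*u + 0*u^2)) i \<le> 2*c}
       \<subseteq> {i. i < N \<and> ev r (\<theta>0 + s1*real r*u) (\<phi>0 + s2*real r*(\<rho>*u + K*u^2)) i < 2*c}"
        using u(1) by (auto simp: evG evG0)
      ultimately show ?thesis by blast
    qed
    have "card {i. i < N \<and> ev r (\<theta>0 + s1*real r*u) (\<phi>0 + s2*real r*(\<rho>*u + 0*u^2)) i \<le> 2*c}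
       < card {i. i < N \<and> ev r (\<theta>0 + s1*real r*u) (\<phi>0 + s2*real r*(\<rho>*u + K*u^2)) i < 2*c}"
      by (rule psubset_card_mono[OF _ sub]) simp
    then show ?thesis using u(4-6) unfolding N_def by blast
  qed
qed


lemma lam_DG: "r \<ge> 2 \<Longrightarrow> lam j (DeltaGamma r \<theta> \<phi>) = lamf (ev r \<theta> \<phi>) (r*r) j"
  unfolding lam_def lamf_def by (simp add: eigs_sorted_DG)

lemma ev_cont: "r > 0 \<Longrightarrow> continuous_on S (\<lambda>s. ev r (a + s*b) (c + s*d) i)"
  unfolding ev_def alph_def by (intro continuous_intros) auto

lemma glue:
  assumes r: "r \<ge> 2" and j: "1 \<le> j" "j \<le> r*r"
    and p: "\<theta>p \<in> {0..pi}" "\<phi>p \<in> {0..pi}" and q: "\<theta>q \<in> {0..pi}" "\<phi>q \<in> {0..pi}"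
    and lq: "lamf (ev r \<theta>q \<phi>q) (r*r) j < E" and lp: "E < lamf (ev r \<theta>p \<phi>p) (r*r) j"
  shows "E \<in> interior (band r j)"
proof -
  define g where "g s = lamf (\<lambda>i. ev r (\<theta>q + s*(\<theta>p-\<theta>q)) (\<phi>q + s*(\<phi>p-\<phi>q)) i) (r*r) j" for s
  have gc: "continuous_on {0..1} g"
    unfolding g_def by (rule lamf_continuous[OF j]) (rule ev_cont, use r in simp)
  have g0: "g 0 = lamf (ev r \<theta>q \<phi>q) (r*r) j" by (simp add: g_def)
  have g1: "g 1 = lamf (ev r \<theta>p \<phi>p) (r*r) j" by (simp add: g_def)
  have sub: "{g 0 <..< g 1} \<subseteq> band r j"
  proof
    fix y assume y: "y \<in> {g 0 <..< g 1}"
    obtain s where s: "0 \<le> s" "s \<le> 1" "g s = y"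
      using IVT'[of g 0 y 1, OF _ _ _ gc] y by auto
    have in1: "\<theta>q + s*(\<theta>p-\<theta>q) \<in> {0..pi}"
    proof -
      have "\<theta>q + s*(\<theta>p-\<theta>q) = (1-s)*\<theta>q + s*\<theta>p" by (simp add: algebra_simps)
      moreover have "0 \<le> (1-s)*\<theta>q + s*\<theta>p" using s p q by auto
      moreover have "(1-s)*\<theta>q + s*\<theta>p \<le> (1-s)*pi + s*pi"
        using s p q by (intro add_mono mult_left_mono) auto
      ultimately show ?thesis by (simp add: algebra_simps)
    qed
    have in2: "\<phi>q + s*(\<phi>p-\<phi>q) \<in> {0..pi}"
    proof -
      have "\<phi>q + s*(\<phi>p-\<phi>q) = (1-s)*\<phi>q + s*\<phi>p" by (simp add: algebra_simps)
      moreover have "0 \<le> (1-s)*\<phi>q + s*\<phi>p" using s p q by auto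
      moreover have "(1-s)*\<phi>q + s*\<phi>p \<le> (1-s)*pi + s*pi"
        using s p q by (intro add_mono mult_left_mono) auto
      ultimately show ?thesis by (simp add: algebra_simps)
    qed
    have "y = lam j (DeltaGamma r (\<theta>q + s*(\<theta>p-\<theta>q)) (\<phi>q + s*(\<phi>p-\<phi>q)))"
      using s(3) by (simp add: lam_DG[OF r] g_def)
    then show "y \<in> band r j" unfolding band_def using in1 in2 by blast
  qed
  show ?thesis
    by (rule interiorI[OF _ _ sub]) (use lq lp g0 g1 in auto)
qed

lemma glue_count:
  assumes r: "r \<ge> 2"
    and p: "\<theta>p \<in> {0..pi}" "\<phi>p \<in> {0..pi}" and q: "\<theta>q \<in> {0..pi}" "\<phi>q \<in> {0..pi}"
    and cnt: "card {i. i < r*r \<and> ev r \<theta>p \<phi>p i \<le> E} < card {i. i < r*r \<and> ev r \<theta>q \<phi>q i < E}"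
  shows "\<exists>j \<in> {1..r^2}. E \<in> interior (band r j)"
proof -
  define j where "j = card {i. i < r*r \<and> ev r \<theta>q \<phi>q i < E}"
  have j1: "1 \<le> j" using cnt j_def by simp
  have "j \<le> card {..<r*r}" unfolding j_def by (intro card_mono) auto
  then have jN: "j \<le> r*r" by simp
  have lq: "lamf (ev r \<theta>q \<phi>q) (r*r) j < E" using lamf_lt[OF j1 jN, of "ev r \<theta>q \<phi>q" E] j_def by simp
  have "\<not> lamf (ev r \<theta>p \<phi>p) (r*r) j \<le> E" using lamf_le[OF j1 jN, of "ev r \<theta>p \<phi>p" E] cnt j_def by simp
  then have lp: "E < lamf (ev r \<theta>p \<phi>p) (r*r) j" by simp
  have "E \<in> interior (band r j)" by (rule glue[OF r j1 jN p q lq lp])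
  then show ?thesis using j1 jN by (auto simp: power2_eq_square)
qed


lemma alph_lat0:
  assumes r: "r > 0"
  shows "alph r (pi * real (a mod 2)) (a div 2) = pi * real a / real r"
proof -
  have "real a = real (a mod 2) + 2 * real (a div 2)"
    by (metis div_mult_mod_eq of_nat_add of_nat_mult of_nat_numeral add.commute mult.commute)
  then show ?thesis using r by (simp add: alph_def field_simps)
qed

lemma alph_lat1:
  assumes r: "r > 0" and a: "1 \<le> a" "a \<le> r"
  shows "r - a div 2 - a mod 2 < r"
    and "alph r (pi * real (a mod 2)) (r - a div 2 - a mod 2) = 2*pi - pi * real a / real r"
proof -
  have le: "a div 2 + a mod 2 \<le> a" by presburger
  have pos: "a div 2 + a mod 2 \<ge> 1" using a by presburger
  show "r - a div 2 - a mod 2 < r" using pos r by linarith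
  have ra: "real (r - a div 2 - a mod 2) = real r - real (a div 2) - real (a mod 2)"
    using le a by (simp add: of_nat_diff)
  have "real a = real (a mod 2) + 2 * real (a div 2)"
    by (metis div_mult_mod_eq of_nat_add of_nat_mult of_nat_numeral add.commute mult.commute)
  then show "alph r (pi * real (a mod 2)) (r - a div 2 - a mod 2) = 2*pi - pi * real a / real r"
    using r unfolding alph_def ra by (simp add: field_simps)
qed

lemma v_ev:
  fixes \<rho> \<kappa> :: real
  assumes r: "r > 0" and "\<rho> > 0 \<or> (\<rho> = 0 \<and> \<kappa> \<ge> 0)"
  shows "eventually (\<lambda>u. 0 \<le> \<rho>*u + \<kappa>*u^2 \<and> \<rho>*u + \<kappa>*u^2 \<le> pi / real r) (at_right 0)"
proof -
  have t: "((\<lambda>u. \<rho>*u + \<kappa>*u^2) \<longlongrightarrow> 0) (at_right 0)" by (auto intro!: tendsto_eq_intros)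
  have up: "eventually (\<lambda>u. \<rho>*u + \<kappa>*u^2 < pi / real r) (at_right 0)"
    using order_tendstoD(2)[OF t] r by simp
  have lo: "eventually (\<lambda>u. 0 \<le> \<rho>*u + \<kappa>*u^2) (at_right 0)"
  proof (cases "\<rho> > 0")
    case True
    have t2: "((\<lambda>u. \<rho> + \<kappa>*u) \<longlongrightarrow> \<rho>) (at_right 0)" by (auto intro!: tendsto_eq_intros)
    have "eventually (\<lambda>u. 0 < \<rho> + \<kappa>*u) (at_right 0)" using order_tendstoD(1)[OF t2 True] .
    then show ?thesis using eventually_at_right_less[of "0::real"]
    proof eventually_elim
      case (elim u)
      then have "0 \<le> u * (\<rho> + \<kappa>*u)" by simp
      then show ?case by (simp add: algebra_simps power2_eq_square)
    qed
  next
    case False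
    then have "\<rho> = 0" "\<kappa> \<ge> 0" using assms(2) by auto
    then show ?thesis by (intro always_eventually) simp
  qed
  show ?thesis using up lo by eventually_elim simp
qed

lemma path_in:
  assumes r: "r > 0" and v: "0 \<le> v" "v \<le> pi / real r"
  shows "pi * real (m mod 2) + (1 - 2 * real (m mod 2)) * real r * v \<in> {0..pi}"
proof -
  have rv: "0 \<le> real r * v" "real r * v \<le> pi" using v r by (auto simp: field_simps)
  have "m mod 2 = 0 \<or> m mod 2 = 1" by auto
  then show ?thesis using rv by auto
qed

lemma s_sq: "(1 - 2 * real (m mod 2))^2 = 1"
proof -
  have "m mod 2 = 0 \<or> m mod 2 = 1" by auto
  then show ?thesis by auto
qed


lemma idx: "l < r \<Longrightarrow> (k*r + l) div r = (k::nat)" "l < r \<Longrightarrow> (k*r + l) mod r = (l::nat)"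
  by auto

lemma idx_lt: "k < r \<Longrightarrow> l < r \<Longrightarrow> k*r + l < r*(r::nat)"
proof -
  assume "k < r" "l < r"
  then have "k*r + l < k*r + r" by simp
  also have "\<dots> = (k+1)*r" by simp
  also have "\<dots> \<le> r*r" using \<open>k < r\<close> by (intro mult_right_mono) auto
  finally show ?thesis .
qed

lemma apply_core:
  fixes r k l :: nat and \<theta>0 \<phi>0 c s1 s2 \<rho> K :: real
  assumes r: "r > 0" and c: "c \<noteq> 0" and s1: "s1^2 = 1" and s2: "s2^2 = 1" and \<rho>: "\<rho> \<ge> 0"
    and nc: "\<forall>i<r*r. \<not> (sin (alph r \<theta>0 (i div r)) = 0 \<and> sin (alph r \<phi>0 (i mod r)) = 0
                  \<and> cos (alph r \<theta>0 (i div r)) + cos (alph r \<phi>0 (i mod r)) = c)"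
    and kl: "k < r" "l < r"
    and f: "cos (alph r \<theta>0 k) + cos (alph r \<phi>0 l) = c"
    and A: "s1 * sin (alph r \<theta>0 k) + s2*\<rho> * sin (alph r \<phi>0 l) = 0"
    and K: "s2 * K * sin (alph r \<phi>0 l) = - (s1^2 * cos (alph r \<theta>0 k) + (s2*\<rho>)^2 * cos (alph r \<phi>0 l))"
    and valid: "eventually (\<lambda>u. \<theta>0 + s1*real r*u \<in> {0..pi} \<and> \<phi>0 + s2*real r*(\<rho>*u + 0*u^2) \<in> {0..pi}
                    \<and> \<phi>0 + s2*real r*(\<rho>*u + K*u^2) \<in> {0..pi}) (at_right 0)"
  shows "\<exists>\<theta>p \<phi>p \<theta>q \<phi>q. \<theta>p \<in> {0..pi} \<and> \<phi>p \<in> {0..pi} \<and> \<theta>q \<in> {0..pi} \<and> \<phi>q \<in> {0..pi} \<and>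
     card {i. i < r*r \<and> ev r \<theta>p \<phi>p i \<le> 2*c} < card {i. i < r*r \<and> ev r \<theta>q \<phi>q i < 2*c}"
proof -
  have i0: "k*r + l < r*r" using idx_lt[OF kl] .
  have d: "(k*r + l) div r = k" "(k*r + l) mod r = l" using idx[OF kl(2)] by auto
  show ?thesis
    by (rule core[OF r c s1 s2 \<rho> nc i0, unfolded d, OF f A K valid])
qed

lemma main_ab:
  fixes r a b :: nat and E :: real
  assumes r2: "r \<ge> 2" and ev2: "even r" and a: "a \<le> r" and b: "0 < b" "b < r"
    and E: "E = 2*cos (pi * real a / real r) + 2*cos (pi * real b / real r)"
    and En: "E \<notin> {-4,0,4}"
  shows "\<exists>\<theta>p \<phi>p \<theta>q \<phi>q. \<theta>p \<in> {0..pi} \<and> \<phi>p \<in> {0..pi} \<and> \<theta>q \<in> {0..pi} \<and> \<phi>q \<in> {0..pi} \<and>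
     card {i. i < r*r \<and> ev r \<theta>p \<phi>p i \<le> E} < card {i. i < r*r \<and> ev r \<theta>q \<phi>q i < E}"
proof -
  have r: "r > 0" using r2 by simp
  define c where "c = E/2"
  have E2: "E = 2*c" by (simp add: c_def)
  define \<theta>0 where "\<theta>0 = pi * real (a mod 2)"
  define s1 where "s1 = 1 - 2 * real (a mod 2)"
  define \<phi>0 where "\<phi>0 = pi * real (b mod 2)"
  define s2 where "s2 = 1 - 2 * real (b mod 2)"
  have s1s: "s1^2 = 1" unfolding s1_def by (rule s_sq)
  have s2s: "s2^2 = 1" unfolding s2_def by (rule s_sq)
  have s1v: "s1 = 1 \<or> s1 = -1" using s1s by (simp add: power2_eq_1_iff)
  have s2v: "s2 = 1 \<or> s2 = -1" using s2s by (simp add: power2_eq_1_iff)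
  have c0: "c \<noteq> 0" using En E2 by auto
  have nc: "\<forall>i<r*r. \<not> (sin (alph r \<theta>0 (i div r)) = 0 \<and> sin (alph r \<phi>0 (i mod r)) = 0
                  \<and> cos (alph r \<theta>0 (i div r)) + cos (alph r \<phi>0 (i mod r)) = c)"
  proof (intro allI impI notI)
    fix i assume "sin (alph r \<theta>0 (i div r)) = 0 \<and> sin (alph r \<phi>0 (i mod r)) = 0
                  \<and> cos (alph r \<theta>0 (i div r)) + cos (alph r \<phi>0 (i mod r)) = c"
    then show False using sin0_cos[of "alph r \<theta>0 (i div r)"] sin0_cos[of "alph r \<phi>0 (i mod r)"] En E2 by auto
  qed
  define sb where "sb = sin (pi * real b / real r)"
  define cb where "cb = cos (pi * real b / real r)"
  define ca where "ca = cos (pi * real a / real r)"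
  have sbp: "sb > 0" unfolding sb_def using b r by (intro sin_gt_zero) (auto simp: field_simps)
  define l0 where "l0 = b div 2"
  define l1 where "l1 = r - b div 2 - b mod 2"
  have l0r: "l0 < r" using b unfolding l0_def by linarith
  have l1r: "l1 < r" unfolding l1_def using alph_lat1(1)[OF r, of b] b by simp
  have Y0: "alph r \<phi>0 l0 = pi * real b / real r" unfolding \<phi>0_def l0_def by (rule alph_lat0[OF r])
  have Y1: "alph r \<phi>0 l1 = 2*pi - pi * real b / real r" unfolding \<phi>0_def l1_def using alph_lat1(2)[OF r, of b] b by simp
  have sY0: "sin (alph r \<phi>0 l0) = sb" "cos (alph r \<phi>0 l0) = cb" using Y0 by (simp_all add: sb_def cb_def)
  have sY1: "sin (alph r \<phi>0 l1) = - sb" "cos (alph r \<phi>0 l1) = cb" using Y1 by (simp_all add: sb_def cb_def)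
  have pick: "\<exists>l<r. sin (alph r \<phi>0 l) = - t * sb \<and> cos (alph r \<phi>0 l) = cb" if "t = 1 \<or> t = -1" for t
    using that l0r l1r sY0 sY1 by auto
  define k0 where "k0 = a div 2"
  have k0r: "k0 < r" using a r unfolding k0_def by linarith
  have X0: "alph r \<theta>0 k0 = pi * real a / real r" unfolding \<theta>0_def k0_def by (rule alph_lat0[OF r])
  have cX0: "cos (alph r \<theta>0 k0) = ca" using X0 by (simp add: ca_def)
  have pathv: "eventually (\<lambda>u. \<theta>0 + s1*real r*u \<in> {0..pi} \<and> \<phi>0 + s2*real r*(\<rho>*u + 0*u^2) \<in> {0..pi}
                    \<and> \<phi>0 + s2*real r*(\<rho>*u + K*u^2) \<in> {0..pi}) (at_right 0)"
    if "\<rho> > 0 \<or> (\<rho> = 0 \<and> K \<ge> 0)" for \<rho> K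
  proof -
    have e1: "eventually (\<lambda>u. 0 \<le> 1*u + 0*u^2 \<and> 1*u + 0*u^2 \<le> pi / real r) (at_right 0)"
      by (rule v_ev[OF r]) simp
    have e2: "eventually (\<lambda>u. 0 \<le> \<rho>*u + 0*u^2 \<and> \<rho>*u + 0*u^2 \<le> pi / real r) (at_right 0)"
      by (rule v_ev[OF r]) (use that in auto)
    have e3: "eventually (\<lambda>u. 0 \<le> \<rho>*u + K*u^2 \<and> \<rho>*u + K*u^2 \<le> pi / real r) (at_right 0)"
      by (rule v_ev[OF r that])
    show ?thesis using e1 e2 e3
    proof eventually_elim
      case (elim u)
      then show ?case unfolding \<theta>0_def s1_def \<phi>0_def s2_def
        using path_in[OF r, of u a] path_in[OF r, of "\<rho>*u + 0*u^2" b] path_in[OF r, of "\<rho>*u + K*u^2" b]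
        by simp
    qed
  qed
  have main2c: "\<exists>\<theta>p \<phi>p \<theta>q \<phi>q. \<theta>p \<in> {0..pi} \<and> \<phi>p \<in> {0..pi} \<and> \<theta>q \<in> {0..pi} \<and> \<phi>q \<in> {0..pi} \<and>
     card {i. i < r*r \<and> ev r \<theta>p \<phi>p i \<le> 2*c} < card {i. i < r*r \<and> ev r \<theta>q \<phi>q i < 2*c}"
  proof (cases "0 < a \<and> a < r")
    case True
    define sa where "sa = sin (pi * real a / real r)"
    have sap: "sa > 0" unfolding sa_def using True r by (intro sin_gt_zero) (auto simp: field_simps)
    have sX0: "sin (alph r \<theta>0 k0) = sa" using X0 by (simp add: sa_def)
    have t: "s1 * s2 = 1 \<or> s1 * s2 = -1" using s1v s2v by (elim disjE) simp_all
    obtain l where l: "l < r" "sin (alph r \<phi>0 l) = - (s1 * s2) * sb" "cos (alph r \<phi>0 l) = cb"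
      using pick[OF t] by blast
    define \<rho> where "\<rho> = sa / sb"
    define K where "K = - (s1^2 * ca + (s2*\<rho>)^2 * cb) / (s2 * sin (alph r \<phi>0 l))"
    have \<rho>p: "\<rho> > 0" unfolding \<rho>_def using sap sbp by simp
    have s2nz: "s2 \<noteq> 0" using s2v by auto
    have "(s1 * s2)^2 = 1" using s1s s2s by (simp add: power_mult_distrib)
    then have "s1 * s2 \<noteq> 0" by auto
    then have "sin (alph r \<phi>0 l) \<noteq> 0" using l(2) sbp by simp
    then have snz: "s2 * sin (alph r \<phi>0 l) \<noteq> 0" using s2nz by simp
    show ?thesis
    proof (rule apply_core[OF r c0 s1s s2s _ nc k0r l(1)])
      show "0 \<le> \<rho>" using \<rho>p by simp
      show "cos (alph r \<theta>0 k0) + cos (alph r \<phi>0 l) = c" using cX0 l(3) E E2 by (simp add: ca_def cb_def)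
      have "s2*\<rho> * sin (alph r \<phi>0 l) = - s1 * (s2^2) * (\<rho> * sb)" using l(2) by (simp add: power2_eq_square algebra_simps)
      also have "\<dots> = - s1 * sa" using s2s sbp by (simp add: \<rho>_def)
      finally show "s1 * sin (alph r \<theta>0 k0) + s2*\<rho> * sin (alph r \<phi>0 l) = 0" using sX0 by simp
      show "s2 * K * sin (alph r \<phi>0 l) = - (s1^2 * cos (alph r \<theta>0 k0) + (s2*\<rho>)^2 * cos (alph r \<phi>0 l))"
        using snz cX0 l(3) unfolding K_def by (simp add: field_simps)
      show "eventually (\<lambda>u. \<theta>0 + s1*real r*u \<in> {0..pi} \<and> \<phi>0 + s2*real r*(\<rho>*u + 0*u^2) \<in> {0..pi}
                    \<and> \<phi>0 + s2*real r*(\<rho>*u + K*u^2) \<in> {0..pi}) (at_right 0)"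
        by (rule pathv) (use \<rho>p in simp)
    qed
  next
    case False
    then have a0r: "a = 0 \<or> a = r" using a by auto
    then have am: "a mod 2 = 0" using ev2 by auto
    have s1_1: "s1 = 1" unfolding s1_def using am by simp
    have sX0: "sin (alph r \<theta>0 k0) = 0" using X0 a0r r by auto
    have caV: "ca = 1 \<or> ca = -1" using X0 a0r r by (auto simp: ca_def)
    have t: "s2*ca = 1 \<or> s2*ca = -1" using s2v caV by (elim disjE) simp_all
    obtain l where l: "l < r" "sin (alph r \<phi>0 l) = - (s2*ca) * sb" "cos (alph r \<phi>0 l) = cb"
      using pick[OF t] by blast
    define \<rho> :: real where "\<rho> = 0"
    define K where "K = - (s1^2 * ca + (s2*\<rho>)^2 * cb) / (s2 * sin (alph r \<phi>0 l))"
    have snz: "s2 * sin (alph r \<phi>0 l) = - ca * sb" using l(2) s2s by (simp add: power2_eq_square algebra_simps)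
    have Kv: "K = 1 / sb" unfolding K_def \<rho>_def snz using s1_1 caV sbp by auto
    show ?thesis
    proof (rule apply_core[OF r c0 s1s s2s _ nc k0r l(1)])
      show "0 \<le> \<rho>" by (simp add: \<rho>_def)
      show "cos (alph r \<theta>0 k0) + cos (alph r \<phi>0 l) = c" using cX0 l(3) E E2 by (simp add: ca_def cb_def)
      show "s1 * sin (alph r \<theta>0 k0) + s2*\<rho> * sin (alph r \<phi>0 l) = 0" using sX0 by (simp add: \<rho>_def)
      show "s2 * K * sin (alph r \<phi>0 l) = - (s1^2 * cos (alph r \<theta>0 k0) + (s2*\<rho>)^2 * cos (alph r \<phi>0 l))"
        using cX0 caV sbp unfolding Kv \<rho>_def s1_1 snz[unfolded mult.assoc[symmetric]] by (auto simp: field_simps snz mult.assoc)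
      show "eventually (\<lambda>u. \<theta>0 + s1*real r*u \<in> {0..pi} \<and> \<phi>0 + s2*real r*(\<rho>*u + 0*u^2) \<in> {0..pi}
                    \<and> \<phi>0 + s2*real r*(\<rho>*u + K*u^2) \<in> {0..pi}) (at_right 0)"
        by (rule pathv) (use sbp in \<open>simp add: \<rho>_def Kv\<close>)
    qed
  qed
  then show ?thesis using E2 by simp
qed


theorem proposition3p3:
  fixes r :: nat and E :: real
  assumes "r > 0" and "even r"
    and "E \<in> CGamma r - {-4, 0, 4}"
  shows "\<exists>j \<in> {1..r^2}. E \<in> interior (band r j)"
proof -
  have r2: "r \<ge> 2" using assms(1,2) by presburger
  have En: "E \<notin> {-4, 0, 4}" using assms(3) by simp
  from assms(3) obtain a b where ab: "a \<le> r" "b \<le> r"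
    and E: "E = 2*cos (pi * real a / real r) + 2*cos (pi * real b / real r)"
    unfolding CGamma_def Cr_def by blast
  have ends: "cos (pi * real x / real r) = 1 \<or> cos (pi * real x / real r) = -1" if "x = 0 \<or> x = r" for x
    using that assms(1) by auto
  have "\<exists>a b. a \<le> r \<and> 0 < b \<and> b < r \<and> E = 2*cos (pi * real a / real r) + 2*cos (pi * real b / real r)"
  proof (cases "0 < b \<and> b < r")
    case True then show ?thesis using ab E by blast
  next
    case False
    then have bb: "b = 0 \<or> b = r" using ab by auto
    show ?thesis
    proof (cases "0 < a \<and> a < r")
      case True then show ?thesis using ab E by (intro exI[of _ b] exI[of _ a]) auto
    next
      case False
      then have aa: "a = 0 \<or> a = r" using ab by auto
      have "E \<in> {-4, 0, 4}" using ends[OF aa] ends[OF bb] E by auto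
      then show ?thesis using En by blast
    qed
  qed
  then obtain a' b' where ab': "a' \<le> r" "0 < b'" "b' < r"
    and E': "E = 2*cos (pi * real a' / real r) + 2*cos (pi * real b' / real r)" by blast
  obtain \<theta>p \<phi>p \<theta>q \<phi>q where pts: "\<theta>p \<in> {0..pi}" "\<phi>p \<in> {0..pi}" "\<theta>q \<in> {0..pi}" "\<phi>q \<in> {0..pi}"
    and cnt: "card {i. i < r*r \<and> ev r \<theta>p \<phi>p i \<le> E} < card {i. i < r*r \<and> ev r \<theta>q \<phi>q i < E}"
    using main_ab[OF r2 assms(2) ab' E' En] by blast
  show ?thesis by (rule glue_count[OF r2 pts cnt])
qed


end
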